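(* Let $G$ be a connected (bull, chair)-free graph. If $G$ has a maximal induced path on $\ell \ge 7$ vertices, then $\mathsf{lpt}(G) \le 2$.
   Context: All graphs are finite and simple. A chair is the graph obtained by subdividing one edge of the claw $K_{1,3}$ exactly once. A bull is the graph obtained from a four-vertex path by adding a vertex adjacent to exactly the two middle vertices of the path. A graph is (bull, chair)-free if it has no induced subgraph isomorphic to a bull or a chair. A maximal induced path is an induced path that is not contained in a strictly larger induced path (inclusion-wise). A longest path of a connected graph $G$ is a path of maximum length in $G$; a longest path transversal is a set of vertices meeting every longest path; $\mathsf{lpt}(G)$ is the minimum cardinality of a longest path transversal of $G$. *)

theory Defs
  imports Main
begin

definition graph :: "'a set \<Rightarrow> ('a \<Rightarrow> 'a \<Rightarrow> bool) \<Rightarrow> bool" where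
  "graph V E \<longleftrightarrow> finite V \<and> (\<forall>x y. E x y \<longrightarrow> E y x) \<and> (\<forall>x. \<not> E x x)
     \<and> (\<forall>x y. E x y \<longrightarrow> x \<in> V \<and> y \<in> V)"

text \<open>A path is a nonempty list of distinct vertices, consecutive ones adjacent.
  Its length (number of edges) is length p - 1.\<close>
definition is_path :: "'a set \<Rightarrow> ('a \<Rightarrow> 'a \<Rightarrow> bool) \<Rightarrow> 'a list \<Rightarrow> bool" where
  "is_path V E p \<longleftrightarrow> p \<noteq> [] \<and> distinct p \<and> set p \<subseteq> V
     \<and> (\<forall>i. Suc i < length p \<longrightarrow> E (p ! i) (p ! Suc i))"

definition connected_graph :: "'a set \<Rightarrow> ('a \<Rightarrow> 'a \<Rightarrow> bool) \<Rightarrow> bool" where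
  "connected_graph V E \<longleftrightarrow> V \<noteq> {} \<and>
     (\<forall>u\<in>V. \<forall>v\<in>V. \<exists>p. is_path V E p \<and> hd p = u \<and> last p = v)"

definition induced_path :: "'a set \<Rightarrow> ('a \<Rightarrow> 'a \<Rightarrow> bool) \<Rightarrow> 'a list \<Rightarrow> bool" where
  "induced_path V E p \<longleftrightarrow> is_path V E p
     \<and> (\<forall>i j. Suc i < j \<and> j < length p \<longrightarrow> \<not> E (p ! i) (p ! j))"

definition maximal_induced_path :: "'a set \<Rightarrow> ('a \<Rightarrow> 'a \<Rightarrow> bool) \<Rightarrow> 'a list \<Rightarrow> bool" where
  "maximal_induced_path V E p \<longleftrightarrow> induced_path V E p
     \<and> \<not> (\<exists>q. induced_path V E q \<and> set p \<subset> set q)"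

definition longest_path :: "'a set \<Rightarrow> ('a \<Rightarrow> 'a \<Rightarrow> bool) \<Rightarrow> 'a list \<Rightarrow> bool" where
  "longest_path V E p \<longleftrightarrow> is_path V E p \<and> (\<forall>q. is_path V E q \<longrightarrow> length q \<le> length p)"

definition lp_transversal :: "'a set \<Rightarrow> ('a \<Rightarrow> 'a \<Rightarrow> bool) \<Rightarrow> 'a set \<Rightarrow> bool" where
  "lp_transversal V E T \<longleftrightarrow> T \<subseteq> V \<and> (\<forall>p. longest_path V E p \<longrightarrow> T \<inter> set p \<noteq> {})"

definition lpt :: "'a set \<Rightarrow> ('a \<Rightarrow> 'a \<Rightarrow> bool) \<Rightarrow> nat" where
  "lpt V E = Min (card ` {T. lp_transversal V E T})"

definition has_induced :: "'a set \<Rightarrow> ('a \<Rightarrow> 'a \<Rightarrow> bool) \<Rightarrow> nat \<Rightarrow> (nat \<Rightarrow> nat \<Rightarrow> bool) \<Rightarrow> bool" where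
  "has_induced V E n H \<longleftrightarrow> (\<exists>f. inj_on f {0..<n} \<and> f ` {0..<n} \<subseteq> V
     \<and> (\<forall>i<n. \<forall>j<n. E (f i) (f j) \<longleftrightarrow> H i j))"

text \<open>Chair: claw with centre 0 and leaves 1,2,3, edge 0-3 subdivided by 4.\<close>
definition chair :: "nat \<Rightarrow> nat \<Rightarrow> bool" where
  "chair i j \<longleftrightarrow> (i, j) \<in> {(0,1),(1,0),(0,2),(2,0),(0,4),(4,0),(4,3),(3,4)}"

text \<open>Bull: path 0-1-2-3 plus vertex 4 adjacent to 1 and 2.\<close>
definition bull :: "nat \<Rightarrow> nat \<Rightarrow> bool" where
  "bull i j \<longleftrightarrow> (i, j) \<in> {(0,1),(1,0),(1,2),(2,1),(2,3),(3,2),(4,1),(1,4),(4,2),(2,4)}"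

definition bull_chair_free :: "'a set \<Rightarrow> ('a \<Rightarrow> 'a \<Rightarrow> bool) \<Rightarrow> bool" where
  "bull_chair_free V E \<longleftrightarrow> \<not> has_induced V E 5 bull \<and> \<not> has_induced V E 5 chair"

end

theory Submission
  imports Defs
begin

lemma succ_nth: "successively R xs \<longleftrightarrow> (\<forall>i. Suc i < length xs \<longrightarrow> R (xs!i) (xs!Suc i))"
proof (induction xs rule: induct_list012)
  case (3 x y xs)
  have "(\<forall>i. Suc i < length (x#y#xs) \<longrightarrow> R ((x#y#xs)!i) ((x#y#xs)!Suc i)) \<longleftrightarrow>
        R x y \<and> (\<forall>i. Suc i < length (y#xs) \<longrightarrow> R ((y#xs)!i) ((y#xs)!Suc i))"
    apply (rule iffI)
     apply (metis Suc_less_eq length_Cons nth_Cons_0 nth_Cons_Suc zero_less_Suc)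
    apply clarify
    subgoal for i by (cases i) auto
    done
  then show ?case using 3 by simp
qed auto

lemma is_path_succ: "is_path V E p \<longleftrightarrow> p \<noteq> [] \<and> distinct p \<and> set p \<subseteq> V \<and> successively E p"
  by (simp add: is_path_def succ_nth)

locale bcg =
  fixes V :: "'a set" and E :: "'a \<Rightarrow> 'a \<Rightarrow> bool"
  assumes graph: "graph V E" and bcf: "bull_chair_free V E"
begin

lemma sym: "E x y \<Longrightarrow> E y x" using graph by (auto simp: graph_def)
lemma irr: "\<not> E x x" using graph by (auto simp: graph_def)
lemma inV1: "E x y \<Longrightarrow> x \<in> V" using graph by (auto simp: graph_def)
lemma inV2: "E x y \<Longrightarrow> y \<in> V" using graph by (auto simp: graph_def)
lemma finV: "finite V" using graph by (auto simp: graph_def)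

lemma symc: "E x y \<longleftrightarrow> E y x" using sym by blast

lemma no_chair:
  assumes "E a b" "E a c" "E a e" "E e d" "\<not>E a d" "\<not>E b c" "\<not>E b d" "\<not>E b e" "\<not>E c d" "\<not>E c e"
    "a \<noteq> d" "b \<noteq> c"
  shows False
proof -
  let ?f = "\<lambda>i. [a,b,c,d,e] ! i"
  have d: "distinct [a,b,c,d,e]" using assms irr sym by auto
  have "inj_on ?f {0..<5}" using d by (simp add: inj_on_nth)
  moreover have "?f ` {0..<5} \<subseteq> V" using assms inV1 inV2
    by (auto simp: less_Suc_eq numeral_eq_Suc)
  moreover have "\<forall>i<5. \<forall>j<5. E (?f i) (?f j) \<longleftrightarrow> chair i j"
    using assms irr by (auto simp: less_Suc_eq numeral_eq_Suc chair_def symc)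
  ultimately have "has_induced V E 5 chair" unfolding has_induced_def by blast
  with bcf show False by (simp add: bull_chair_free_def)
qed

lemma no_bull:
  assumes "E x0 x1" "E x1 x2" "E x2 x3" "E x4 x1" "E x4 x2"
     "\<not>E x0 x2" "\<not>E x0 x3" "\<not>E x0 x4" "\<not>E x1 x3" "\<not>E x3 x4"
  shows False
proof -
  let ?f = "\<lambda>i. [x0,x1,x2,x3,x4] ! i"
  have d: "distinct [x0,x1,x2,x3,x4]" using assms irr sym by auto
  have "inj_on ?f {0..<5}" using d by (simp add: inj_on_nth)
  moreover have "?f ` {0..<5} \<subseteq> V" using assms inV1 inV2
    by (auto simp: less_Suc_eq numeral_eq_Suc)
  moreover have "\<forall>i<5. \<forall>j<5. E (?f i) (?f j) \<longleftrightarrow> bull i j"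
    using assms irr by (auto simp: less_Suc_eq numeral_eq_Suc bull_def symc)
  ultimately have "has_induced V E 5 bull" unfolding has_induced_def by blast
  with bcf show False by (simp add: bull_chair_free_def)
qed
end

locale mpath = bcg V E for V :: "'a set" and E +
  fixes P :: "'a list"
  assumes conn: "connected_graph V E" and mip: "maximal_induced_path V E P" and len7: "7 \<le> length P"
begin

abbreviation "l \<equiv> length P"

lemma Pip: "induced_path V E P" using mip by (simp add: maximal_induced_path_def)
lemma Pd: "distinct P" using Pip by (simp add: induced_path_def is_path_def)
lemma Pset: "set P \<subseteq> V" using Pip by (simp add: induced_path_def is_path_def)
lemma Pa0: "Suc i < l \<Longrightarrow> E (P!i) (P!Suc i)"
  using Pip by (auto simp: induced_path_def is_path_def)
lemma Pa: "i < l \<Longrightarrow> j < l \<Longrightarrow> j = Suc i \<or> i = Suc j \<Longrightarrow> E (P!i) (P!j)"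
  using Pa0[of i] Pa0[of j] sym[of "P!j" "P!i"] by blast
lemma Pn: "i < l \<Longrightarrow> j < l \<Longrightarrow> i + 2 \<le> j \<or> j + 2 \<le> i \<Longrightarrow> \<not> E (P!i) (P!j)"
proof
  assume a: "i < l" "j < l" "i + 2 \<le> j \<or> j + 2 \<le> i" "E (P!i) (P!j)"
  have ind: "\<And>i j. Suc i < j \<Longrightarrow> j < l \<Longrightarrow> \<not> E (P!i) (P!j)" using Pip by (auto simp: induced_path_def)
  from a show False using ind[of i j] ind[of j i] sym[of "P!i" "P!j"] by (metis add_2_eq_Suc' less_eq_Suc_le)
qed
lemma Peq: "i < l \<Longrightarrow> j < l \<Longrightarrow> P!i = P!j \<longleftrightarrow> i = j"
  using Pd by (simp add: nth_eq_iff_index_eq)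
lemma PV: "i < l \<Longrightarrow> P!i \<in> V" using Pset by auto
lemma notP: "v \<notin> set P \<Longrightarrow> i < l \<Longrightarrow> v \<noteq> P!i \<and> P!i \<noteq> v"
  by auto

lemma ext_front:
  assumes v: "v \<notin> set P" "E v (P!0)" and o: "\<And>i. 0 < i \<Longrightarrow> i < l \<Longrightarrow> \<not>E v (P!i)"
  shows False
proof -
  let ?q = "v # P"
  have "is_path V E ?q"
    unfolding is_path_def
  proof (intro conjI allI impI)
    show "distinct ?q" using v Pd by simp
    show "set ?q \<subseteq> V" using Pset inV1[OF v(2)] by simp
    fix i assume "Suc i < length ?q"
    then show "E (?q!i) (?q!Suc i)" using v by (cases i) (auto intro: Pa)
  qed simp
  moreover have "\<forall>i j. Suc i < j \<and> j < length ?q \<longrightarrow> \<not> E (?q!i) (?q!j)"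
  proof (intro allI impI)
    fix i j assume a: "Suc i < j \<and> j < length ?q"
    then obtain j' where j: "j = Suc j'" by (cases j) auto
    show "\<not> E (?q!i) (?q!j)"
    proof (cases i)
      case 0 then show ?thesis using a j o[of j'] by simp
    next
      case (Suc i') then show ?thesis using a j Pn[of i' j'] by simp
    qed
  qed
  ultimately have "induced_path V E ?q" by (simp add: induced_path_def)
  moreover have "set P \<subset> set ?q" using v by auto
  ultimately show False using mip unfolding maximal_induced_path_def by blast
qed

lemma ext_back:
  assumes v: "v \<notin> set P" "E v (P!(l-1))" and o: "\<And>i. i < l - 1 \<Longrightarrow> \<not>E v (P!i)"
  shows False
proof -
  let ?q = "P @ [v]"
  have nq: "\<And>i. ?q!i = (if i < l then P!i else [v]!(i-l))" by (simp add: nth_append)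
  have "is_path V E ?q"
    unfolding is_path_def
  proof (intro conjI allI impI)
    show "distinct ?q" using v Pd by simp
    show "set ?q \<subseteq> V" using Pset inV1[OF v(2)] by simp
    fix i assume i: "Suc i < length ?q"
    show "E (?q!i) (?q!Suc i)"
    proof (cases "Suc i < l")
      case True then show ?thesis using Pa[of i "Suc i"] by (simp add: nth_append)
    next
      case False then have "i = l - 1" using i by simp
      then show ?thesis using v(2) sym[of v] len7 by (simp add: nth_append)
    qed
  qed simp
  moreover have "\<forall>i j. Suc i < j \<and> j < length ?q \<longrightarrow> \<not> E (?q!i) (?q!j)"
  proof (intro allI impI)
    fix i j assume a: "Suc i < j \<and> j < length ?q"
    show "\<not> E (?q!i) (?q!j)"
    proof (cases "j < l")
      case True then show ?thesis using a Pn[of i j] by (simp add: nth_append)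
    next
      case False then have "j = l" using a by simp
      then show ?thesis using a o[of i] sym[of "P!i" v] by (auto simp: nth_append)
    qed
  qed
  ultimately have "induced_path V E ?q" by (simp add: induced_path_def)
  moreover have "set P \<subset> set ?q" using v by auto
  ultimately show False using mip unfolding maximal_induced_path_def by blast
qed


definition Sv :: "'a \<Rightarrow> nat set" where "Sv v = {i. i < l \<and> E v (P!i)}"

lemma Sv_iff: "i \<in> Sv v \<longleftrightarrow> i < l \<and> E v (P!i)" by (simp add: Sv_def)
lemma Sv_fin: "finite (Sv v)" by (simp add: Sv_def)

lemma maxside:
  assumes v: "v \<notin> set P" and ne: "Sv v \<noteq> {}" and le: "\<forall>i\<in>Sv v. i + 3 \<le> l"
  shows "Sv v = {0,1} \<or> (\<exists>m. m + 5 \<le> l \<and> Sv v = {m, Suc m, Suc (Suc m)})"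
proof -
  define M where "M = Max (Sv v)"
  have MS: "M \<in> Sv v" using Max_in Sv_fin ne M_def by auto
  have Mmax: "\<And>i. i \<in> Sv v \<Longrightarrow> i \<le> M" using Max_ge Sv_fin M_def by auto
  have M3: "M + 3 \<le> l" using le MS by auto
  have vM: "E v (P!M)" using MS by (simp add: Sv_def)
  have n1: "\<not> E v (P!(M+1))" using Mmax[of "M+1"] M3 by (auto simp: Sv_def)
  have n2: "\<not> E v (P!(M+2))" using Mmax[of "M+2"] M3 by (auto simp: Sv_def)
  have vnP: "\<And>i. i < l \<Longrightarrow> v \<noteq> P!i \<and> P!i \<noteq> v" using v by auto
  show ?thesis
  proof (cases M)
    case 0
    have "\<And>i. 0 < i \<Longrightarrow> i < l \<Longrightarrow> \<not>E v (P!i)" using Mmax 0 by (force simp: Sv_def)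
    then show ?thesis using ext_front[OF v] vM 0 by blast
  next
    case (Suc a)
    show ?thesis
    proof (cases "E v (P!a)")
      case False
      have False
        apply (rule no_chair[of "P!M" "P!a" v "P!(M+1)" "P!(M+2)"])
        using Suc M3 vM n1 n2 False vnP by (simp_all add: symc Pa Pn Peq)
      then show ?thesis ..
    next
      case vM1: True
      show ?thesis
      proof (cases a)
        case 0
        have "Sv v = {0,1}"
        proof
          show "Sv v \<subseteq> {0,1}" using Mmax Suc 0 by force
          show "{0,1} \<subseteq> Sv v" using vM vM1 Suc 0 M3 by (auto simp: Sv_def)
        qed
        then show ?thesis ..
      next
        case (Suc b)
        note Mb = \<open>M = Suc a\<close> Suc
        show ?thesis
        proof (cases "E v (P!b)")
          case False
          have False
            apply (rule no_bull[of "P!b" "P!a" "P!M" "P!(M+1)" v])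
            using Mb M3 vM n1 n2 vM1 False vnP by (simp_all add: symc Pa Pn Peq)
          then show ?thesis ..
        next
          case vM2: True
          show ?thesis
          proof (cases "\<exists>c. b = Suc c \<and> E v (P!c)")
            case True
            then obtain c where c: "b = Suc c" "E v (P!c)" by blast
            have False
              apply (rule no_bull[of "P!c" v "P!M" "P!(M+1)" "P!a"])
              using Mb M3 vM n1 n2 vM1 vM2 c vnP by (simp_all add: symc Pa Pn Peq)
            then show ?thesis ..
          next
            case nM3: False
            show ?thesis
            proof (cases "\<exists>k\<in>Sv v. k + 4 \<le> M")
              case True
              then obtain k where k: "k \<in> Sv v" "k + 4 \<le> M" by blast
              have vk: "E v (P!k)" using k by (simp add: Sv_def)
              have False
                apply (rule no_chair[of v "P!k" "P!b" "P!M" "P!(M+1)"])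
                using Mb M3 vM n1 n2 vM1 vM2 k vk vnP by (simp_all add: symc Pa Pn Peq)
              then show ?thesis ..
            next
              case False
              have "Sv v = {b, Suc b, Suc (Suc b)}"
              proof
                show "Sv v \<subseteq> {b, Suc b, Suc (Suc b)}"
                proof
                  fix i assume i: "i \<in> Sv v"
                  have "i \<le> M" using Mmax i by auto
                  moreover have "\<not> i + 4 \<le> M" using False i by auto
                  moreover have "Suc i \<noteq> b" using nM3 i by (auto simp: Sv_def)
                  ultimately show "i \<in> {b, Suc b, Suc (Suc b)}" using Mb by auto
                qed
                show "{b, Suc b, Suc (Suc b)} \<subseteq> Sv v" using vM vM1 vM2 M3 Mb by (simp add: Sv_def)
              qed
              moreover have "b + 5 \<le> l" using M3 Mb by simp
              ultimately show ?thesis by blast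
            qed
          qed
        qed
      qed
    qed
  qed
qed

lemma minside:
  assumes v: "v \<notin> set P" and ne: "Sv v \<noteq> {}" and ge: "\<forall>i\<in>Sv v. 2 \<le> i"
  shows "Sv v = {l-2, l-1} \<or> (\<exists>m. 2 \<le> m \<and> Suc (Suc m) < l \<and> Sv v = {m, Suc m, Suc (Suc m)})"
proof -
  define m where "m = Min (Sv v)"
  have mS: "m \<in> Sv v" using Min_in Sv_fin ne m_def by auto
  have mmin: "\<And>i. i \<in> Sv v \<Longrightarrow> m \<le> i" using Min_le Sv_fin m_def by auto
  have m2: "2 \<le> m" using ge mS by auto
  then obtain c where mc: "m = Suc (Suc c)" by (metis add_2_eq_Suc le_Suc_ex)
  have ml: "m < l" using mS by (simp add: Sv_def)
  have vm: "E v (P!m)" using mS by (simp add: Sv_def)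
  have n1: "\<not> E v (P!(Suc c))" using mmin[of "Suc c"] mc ml by (auto simp: Sv_def)
  have n2: "\<not> E v (P!c)" using mmin[of "c"] mc ml by (auto simp: Sv_def)
  have vnP: "\<And>i. i < l \<Longrightarrow> v \<noteq> P!i \<and> P!i \<noteq> v" using v by auto
  show ?thesis
  proof (cases "Suc m = l")
    case True
    have "\<And>i. i < l - 1 \<Longrightarrow> \<not>E v (P!i)"
    proof
      fix i assume "i < l - 1" "E v (P!i)"
      then have "i \<in> Sv v" by (simp add: Sv_def)
      then show False using mmin \<open>i < l - 1\<close> True by fastforce
    qed
    moreover have "E v (P!(l-1))" using vm True by (metis diff_Suc_1)
    ultimately show ?thesis using ext_back[OF v] by blast
  next
    case ml1: False
    then have ml1: "Suc m < l" using ml by simp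
    show ?thesis
    proof (cases "E v (P!(Suc m))")
      case False
      have False
        apply (rule no_chair[of "P!m" "P!(Suc m)" v "P!(Suc c)" "P!c"])
        using mc ml1 vm n1 n2 False vnP by (simp_all add: symc Pa Pn Peq)
      then show ?thesis ..
    next
      case vm1: True
      show ?thesis
      proof (cases "Suc (Suc m) = l")
        case True
        have "Sv v = {m, Suc m}"
        proof
          show "Sv v \<subseteq> {m, Suc m}" using mmin True by (force simp: Sv_def)
          show "{m, Suc m} \<subseteq> Sv v" using vm vm1 True by (auto simp: Sv_def)
        qed
        moreover have "{l-2, l-1} = {m, Suc m}" using True by auto
        ultimately show ?thesis by simp
      next
        case False
        then have ml2: "Suc (Suc m) < l" using ml1 by simp
        show ?thesis
        proof (cases "E v (P!(Suc (Suc m)))")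
          case False
          have False
            apply (rule no_bull[of "P!(Suc (Suc m))" "P!(Suc m)" "P!m" "P!(Suc c)" v])
            using mc ml2 vm n1 n2 vm1 False vnP by (simp_all add: symc Pa Pn Peq)
          then show ?thesis ..
        next
          case vm2: True
          show ?thesis
          proof (cases "Suc (Suc (Suc m)) < l \<and> E v (P!(Suc (Suc (Suc m))))")
            case True
            have False
              apply (rule no_bull[of "P!(Suc (Suc (Suc m)))" v "P!m" "P!(Suc c)" "P!(Suc m)"])
              using mc ml2 vm n1 n2 vm1 vm2 True vnP by (simp_all add: symc Pa Pn Peq)
            then show ?thesis ..
          next
            case nM3: False
            show ?thesis
            proof (cases "\<exists>k\<in>Sv v. m + 4 \<le> k")
              case True
              then obtain k where k: "k \<in> Sv v" "m + 4 \<le> k" by blast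
              have vk: "E v (P!k)" "k < l" using k by (auto simp: Sv_def)
              have False
                apply (rule no_chair[of v "P!k" "P!(Suc (Suc m))" "P!m" "P!(Suc c)"])
                using mc ml2 vm n1 n2 vm1 vm2 k vk vnP by (simp_all add: symc Pa Pn Peq)
              then show ?thesis ..
            next
              case False
              have "Sv v = {m, Suc m, Suc (Suc m)}"
              proof
                show "Sv v \<subseteq> {m, Suc m, Suc (Suc m)}"
                proof
                  fix i assume i: "i \<in> Sv v"
                  have "m \<le> i" using mmin i by auto
                  moreover have "\<not> m + 4 \<le> i" using False i by auto
                  moreover have "i \<noteq> Suc (Suc (Suc m))" using nM3 i by (auto simp: Sv_def)
                  ultimately show "i \<in> {m, Suc m, Suc (Suc m)}" by auto
                qed
                show "{m, Suc m, Suc (Suc m)} \<subseteq> Sv v" using vm vm1 vm2 ml2 by (simp add: Sv_def)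
              qed
              then show ?thesis using m2 ml2 by blast
            qed
          qed
        qed
      qed
    qed
  qed
qed

lemma lform: obtains n where "l = n + 7" using len7 by (metis add.commute le_Suc_ex)

lemma A2:
  assumes v: "v \<notin> set P" and a: "E v (P!(l-2))" "\<not> E v (P!(l-1))" "m \<le> 1" "E v (P!m)"
  shows False
proof -
  obtain n where ln: "l = n + 7" using lform by blast
  have vnP: "\<And>i. i < l \<Longrightarrow> v \<noteq> P!i \<and> P!i \<noteq> v" using v by auto
  have e: "l - 1 = n + 6" "l - 2 = n + 5" using ln by simp_all
  have a': "E v (P!(n+5))" "\<not> E v (P!(n+6))" using a(1,2) unfolding e by simp_all
  show False
  proof (cases "E v (P!(n+3))")
    case True
    show False
      apply (rule no_chair[of v "P!m" "P!(n+3)" "P!(n+5)" "P!(n+6)"])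
      using a a' ln True vnP by (simp_all add: symc Pa Pn Peq)
  next
    case n3: False
    show False
    proof (cases "E v (P!(n+4))")
      case False
      show False
        apply (rule no_chair[of "P!(n+5)" v "P!(n+6)" "P!(n+4)" "P!(n+3)"])
        using a a' ln n3 False vnP by (simp_all add: symc Pa Pn Peq)
    next
      case True
      show False
        apply (rule no_bull[of "P!(n+3)" "P!(n+4)" "P!(n+5)" "P!(n+6)" v])
        using a a' ln n3 True vnP by (simp_all add: symc Pa Pn Peq)
    qed
  qed
qed

lemma A2':
  assumes v: "v \<notin> set P" and a: "E v (P!1)" "\<not> E v (P!0)" "l - 2 \<le> k" "k < l" "E v (P!k)"
  shows False
proof -
  obtain n where ln: "l = n + 7" using lform by blast
  have vnP: "\<And>i. i < l \<Longrightarrow> v \<noteq> P!i \<and> P!i \<noteq> v" using v by auto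
  have k: "n + 5 \<le> k" using a ln by simp
  show False
  proof (cases "E v (P!3)")
    case True
    show False
      apply (rule no_chair[of v "P!k" "P!3" "P!1" "P!0"])
      using a k ln True vnP by (simp_all add: symc Pa Pn Peq)
  next
    case n3: False
    show False
    proof (cases "E v (P!2)")
      case False
      show False
        apply (rule no_chair[of "P!1" v "P!0" "P!2" "P!3"])
        using a ln n3 False vnP by (simp_all add: symc Pa Pn Peq)
    next
      case True
      show False
        apply (rule no_bull[of "P!3" "P!2" "P!1" "P!0" v])
        using a ln n3 True vnP by (simp_all add: symc Pa Pn Peq)
    qed
  qed
qed

lemma A3a:
  assumes v: "v \<notin> set P" and a: "E v (P!0)" "E v (P!(l-1))" "E v (P!1)"
  shows "\<forall>i<l. E v (P!i)"
proof (rule ccontr)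
  assume "\<not> (\<forall>i<l. E v (P!i))"
  then have ex: "\<exists>i. i < l \<and> \<not> E v (P!i)" by blast
  define j where "j = (LEAST i. i < l \<and> \<not> E v (P!i))"
  have j: "j < l" "\<not> E v (P!j)" using LeastI_ex[OF ex] j_def by auto
  have jmin: "\<And>i. i < j \<Longrightarrow> E v (P!i)" using not_less_Least j_def j(1) by fastforce
  obtain n where ln: "l = n + 7" using lform by blast
  have vnP: "\<And>i. i < l \<Longrightarrow> v \<noteq> P!i \<and> P!i \<noteq> v" using v by auto
  have e: "l - 1 = n + 6" using ln by simp
  have a': "E v (P!(n+6))" using a(2) unfolding e by simp
  have j2: "2 \<le> j" using j a by (metis One_nat_def less_2_cases not_le)
  have "j \<noteq> n + 6" using j(2) a' by auto
  then have jl: "j < n + 6" using j(1) ln by simp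
  show False
  proof (cases "j = 2")
    case True
    show False
      apply (rule no_bull[of "P!(n+6)" v "P!1" "P!2" "P!0"])
      using a a' ln j True vnP by (simp_all add: symc Pa Pn Peq)
  next
    case False
    show False
    proof (cases "j = 3")
      case True
      have "E v (P!2)" using jmin True by simp
      then show False
        apply (rule_tac no_chair[of v "P!0" "P!(n+6)" "P!2" "P!3"])
        using a a' ln j True vnP by (simp_all add: symc Pa Pn Peq)
    next
      case False
      then have "4 \<le> j" using j2 \<open>j \<noteq> 2\<close> by simp
      then obtain t where t: "j = t + 4" by (metis add.commute le_Suc_ex)
      have "E v (P!t)" "E v (P!(t+2))" "E v (P!(t+3))" using jmin t by auto
      then show False
        apply (rule_tac no_bull[of "P!t" v "P!(t+3)" "P!(t+4)" "P!(t+2)"])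
        using a a' ln j t jl vnP by (simp_all add: symc Pa Pn Peq)
    qed
  qed
qed

lemma A3a':
  assumes v: "v \<notin> set P" and a: "E v (P!0)" "E v (P!(l-1))" "E v (P!(l-2))"
  shows "\<forall>i<l. E v (P!i)"
proof (rule ccontr)
  assume "\<not> (\<forall>i<l. E v (P!i))"
  then have ne: "{i. i < l \<and> \<not> E v (P!i)} \<noteq> {}" by blast
  have fin: "finite {i. i < l \<and> \<not> E v (P!i)}" by simp
  define J where "J = Max {i. i < l \<and> \<not> E v (P!i)}"
  have J: "J < l" "\<not> E v (P!J)" using Max_in[OF fin ne] J_def by auto
  have Jmax: "\<And>i. J < i \<Longrightarrow> i < l \<Longrightarrow> E v (P!i)" using Max_ge[OF fin] J_def by fastforce
  obtain n where ln: "l = n + 7" using lform by blast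
  have vnP: "\<And>i. i < l \<Longrightarrow> v \<noteq> P!i \<and> P!i \<noteq> v" using v by auto
  have e: "l - 1 = n + 6" "l - 2 = n + 5" using ln by simp_all
  have a': "E v (P!(n+6))" "E v (P!(n+5))" using a(2,3) unfolding e by simp_all
  have "J \<noteq> n + 6" "J \<noteq> n + 5" using J(2) a' by auto
  moreover have "J \<noteq> 0" proof assume "J = 0" then show False using J(2) a(1) by simp qed
  ultimately have Jl: "J \<le> n + 4" "1 \<le> J" using J(1) ln by simp_all
  show False
  proof (cases "J = n + 4")
    case True
    show False
      apply (rule no_bull[of "P!0" v "P!(n+5)" "P!(n+4)" "P!(n+6)"])
      using a a' ln J True vnP by (simp_all add: symc Pa Pn Peq)
  next
    case False
    show False
    proof (cases "J = n + 3")
      case True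
      have "E v (P!(n+4))" using Jmax True ln by simp
      then show False
        apply (rule_tac no_chair[of v "P!(n+6)" "P!0" "P!(n+4)" "P!(n+3)"])
        using a a' ln J True vnP by (simp_all add: symc Pa Pn Peq)
    next
      case False
      then have J2: "J \<le> n + 2" using Jl \<open>J \<noteq> n + 4\<close> by simp
      have "E v (P!(J+1))" "E v (P!(J+2))" "E v (P!(J+4))" using Jmax J2 ln by auto
      then show False
        apply (rule_tac no_bull[of "P!(J+4)" v "P!(J+1)" "P!J" "P!(J+2)"])
        using a a' ln J J2 vnP by (simp_all add: symc Pa Pn Peq)
    qed
  qed
qed

lemma A3b:
  assumes v: "v \<notin> set P" and a: "E v (P!0)" "E v (P!(l-1))" "\<not> E v (P!1)" "\<not> E v (P!(l-2))"
    "0 < k" "k < l - 1" "E v (P!k)"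
  shows False
proof -
  obtain n where ln: "l = n + 7" using lform by blast
  have vnP: "\<And>i. i < l \<Longrightarrow> v \<noteq> P!i \<and> P!i \<noteq> v" using v by auto
  have e: "l - 1 = n + 6" "l - 2 = n + 5" using ln by simp_all
  have a': "E v (P!(n+6))" "\<not> E v (P!(n+5))" "k < n + 6" using a(2,4,6) unfolding e by simp_all
  have "k \<noteq> 1" "k \<noteq> n + 5" using a a' by auto
  then have k: "2 \<le> k" "k \<le> n + 4" using a' a by simp_all
  show False
  proof (cases "k = 2")
    case True
    show False
      apply (rule no_chair[of v "P!2" "P!0" "P!(n+6)" "P!(n+5)"])
      using a a' ln k True vnP by (simp_all add: symc Pa Pn Peq)
  next
    case False
    show False
      apply (rule no_chair[of v "P!k" "P!(n+6)" "P!0" "P!1"])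
      using a a' ln k False vnP by (simp_all add: symc Pa Pn Peq)
  qed
qed

lemma classify:
  assumes v: "v \<notin> set P" and ne: "Sv v \<noteq> {}" and nW: "\<not> (\<forall>i<l. E v (P!i))"
  shows "Sv v = {0,1} \<or> Sv v = {l-2,l-1} \<or> Sv v = {0,l-1} \<or>
         (\<exists>m. Suc (Suc m) < l \<and> Sv v = {m, Suc m, Suc (Suc m)})"
proof (cases "\<forall>i\<in>Sv v. i + 3 \<le> l")
  case True
  from maxside[OF v ne True] show ?thesis
  proof (elim disjE)
    assume "\<exists>m. m + 5 \<le> l \<and> Sv v = {m, Suc m, Suc (Suc m)}"
    then obtain m where "m + 5 \<le> l" "Sv v = {m, Suc m, Suc (Suc m)}" by blast
    then show ?thesis by (intro disjI2 exI[of _ m]) simp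
  qed simp
next
  case F1: False
  show ?thesis
  proof (cases "\<forall>i\<in>Sv v. 2 \<le> i")
    case True
    from minside[OF v ne True] show ?thesis by blast
  next
    case F2: False
    obtain M where M: "M \<in> Sv v" "l < M + 3" using F1 by auto
    obtain m where m: "m \<in> Sv v" "m < 2" using F2 by auto
    have MM: "M < l" "E v (P!M)" "m < l" "E v (P!m)" using M m by (auto simp: Sv_def)
    show ?thesis
    proof (cases "E v (P!(l-1))")
      case False
      then have "M \<noteq> l - 1" using MM by auto
      then have "M = l - 2" using MM(1) M(2) by linarith
      then have "E v (P!(l-2))" using MM by simp
      from A2[OF v this False _ MM(4)] m(2) show ?thesis by simp
    next
      case vl: True
      show ?thesis
      proof (cases "E v (P!0)")
        case False
        then have "m \<noteq> 0" using MM by (intro notI) simp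
        then have "m = 1" using m by simp
        then have e1: "E v (P!1)" using MM by simp
        have "l - 2 \<le> M" using M(2) by linarith
        from A2'[OF v e1 False this MM(1) MM(2)] show ?thesis ..
      next
        case v0: True
        show ?thesis
        proof (cases "E v (P!1)")
          case True then show ?thesis using A3a[OF v v0 vl] nW by blast
        next
          case n1: False
          show ?thesis
          proof (cases "E v (P!(l-2))")
            case True then show ?thesis using A3a'[OF v v0 vl] nW by blast
          next
            case n2: False
            have "Sv v = {0, l-1}"
            proof
              show "Sv v \<subseteq> {0, l-1}"
              proof
                fix k assume k: "k \<in> Sv v"
                then have "k < l" "E v (P!k)" by (auto simp: Sv_def)
                then show "k \<in> {0, l-1}" using A3b[OF v v0 vl n1 n2, of k]
                  by (cases "k = 0"; cases "k = l - 1") (auto, linarith)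
              qed
              show "{0, l-1} \<subseteq> Sv v" using v0 vl len7 by (auto simp: Sv_def)
            qed
            then show ?thesis by blast
          qed
        qed
      qed
    qed
  qed
qed

end

context mpath begin

definition "W = {w. \<forall>i<l. E w (P!i)}"
definition "Np = {v. v \<notin> set P \<and> Sv v \<noteq> {} \<and> \<not>(\<forall>i<l. E v (P!i))}"
definition "C0 = set P \<union> Np"
definition "R = {r \<in> V. r \<notin> set P \<and> Sv r = {}}"

lemma l0: "0 < l" by (rule less_le_trans[OF _ len7]) simp

lemma W_adj: "w \<in> W \<Longrightarrow> i < l \<Longrightarrow> E w (P!i)" by (simp add: W_def)
lemma W_nP: "w \<in> W \<Longrightarrow> w \<notin> set P"
proof
  assume "w \<in> W" "w \<in> set P"
  then obtain i where "i < l" "w = P!i" by (auto simp: in_set_conv_nth)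
  then show False using W_adj[OF \<open>w \<in> W\<close> \<open>i < l\<close>] irr by simp
qed
lemma W_V: "w \<in> W \<Longrightarrow> w \<in> V" using W_adj[OF _ l0] inV1 by blast
lemma R_nadj: "r \<in> R \<Longrightarrow> i < l \<Longrightarrow> \<not> E r (P!i)" by (auto simp: R_def Sv_def)
lemma R_nP: "r \<in> R \<Longrightarrow> r \<notin> set P" by (simp add: R_def)
lemma R_V: "r \<in> R \<Longrightarrow> r \<in> V" by (simp add: R_def)
lemma Np_nP: "v \<in> Np \<Longrightarrow> v \<notin> set P" by (simp add: Np_def)
lemma Np_V: "v \<in> Np \<Longrightarrow> v \<in> V"
proof -
  assume "v \<in> Np"
  then obtain i where "i < l" "E v (P!i)" by (auto simp: Np_def Sv_def)
  then show ?thesis using inV1 by blast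
qed
lemma V_cases: "x \<in> V \<Longrightarrow> x \<in> set P \<or> x \<in> W \<or> x \<in> Np \<or> x \<in> R"
  by (auto simp: W_def Np_def R_def Sv_def)
lemma R_W: "r \<in> R \<Longrightarrow> r \<notin> W" using R_nadj[OF _ l0] W_adj[OF _ l0] by blast
lemma R_Np: "r \<in> R \<Longrightarrow> r \<notin> Np" by (simp add: R_def Np_def)
lemma W_Np: "w \<in> W \<Longrightarrow> w \<notin> Np" by (simp add: W_def Np_def)
lemma Np_types: "v \<in> Np \<Longrightarrow> Sv v = {0,1} \<or> Sv v = {l-2,l-1} \<or> Sv v = {0,l-1} \<or>
         (\<exists>m. Suc (Suc m) < l \<and> Sv v = {m, Suc m, Suc (Suc m)})"
  using classify by (simp add: Np_def)

lemma Sv_E: "Sv v = S \<Longrightarrow> i < l \<Longrightarrow> E v (P!i) \<longleftrightarrow> i \<in> S"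
  by (auto simp: Sv_def)

lemma clq:
  assumes "u \<notin> set P" "v \<notin> set P" "u \<noteq> v" "a < l" "e < l" "d < l" "e = Suc a \<or> a = Suc e"
    "d = Suc e \<or> e = Suc d" "a + 2 \<le> d \<or> d + 2 \<le> a" "E u (P!a)" "E v (P!a)" "\<not>E u (P!e)" "\<not>E v (P!e)"
    "\<not>E u (P!d)" "\<not>E v (P!d)"
  shows "E u v"
proof (rule ccontr)
  assume n: "\<not> E u v"
  have vnP: "\<And>i. i < l \<Longrightarrow> v \<noteq> P!i \<and> P!i \<noteq> v \<and> u \<noteq> P!i \<and> P!i \<noteq> u" using assms by auto
  have f: "E (P!a) (P!e)" "E (P!e) (P!d)" "\<not> E (P!a) (P!d)" "P!a \<noteq> P!d"
    using Pa[of a e] Pa[of e d] Pn[of a d] Peq[of a d] assms by auto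
  show False
    apply (rule no_chair[of "P!a" u v "P!e" "P!d"])
    using assms n vnP f by (simp_all add: symc)
qed

lemma same_type_adj:
  assumes u: "u \<in> Np" and v: "v \<in> Np" and uv: "u \<noteq> v" and S: "Sv u = Sv v"
  shows "E u v"
proof -
  have nP: "u \<notin> set P" "v \<notin> set P" using u v by (simp_all add: Np_def)
  obtain n where ln: "l = n + 7" using lform by blast
  have SEu: "\<And>i. i < l \<Longrightarrow> E u (P!i) \<longleftrightarrow> i \<in> Sv u" by (simp add: Sv_def)
  have SEv: "\<And>i. i < l \<Longrightarrow> E v (P!i) \<longleftrightarrow> i \<in> Sv u" unfolding S by (simp add: Sv_def)
  from Np_types[OF u] show ?thesis
  proof (elim disjE exE conjE)
    assume A: "Sv u = {0,1}"
    show ?thesis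
      apply (rule clq[OF nP uv, of 1 2 3])
      using A SEu SEv ln by simp_all
  next
    assume A: "Sv u = {l-2,l-1}"
    show ?thesis
      apply (rule clq[OF nP uv, of "n+5" "n+4" "n+3"])
      using A SEu SEv ln by simp_all
  next
    assume A: "Sv u = {0,l-1}"
    show ?thesis
      apply (rule clq[OF nP uv, of 0 1 2])
      using A SEu SEv ln by simp_all
  next
    fix m assume m: "Suc (Suc m) < l" and A: "Sv u = {m, Suc m, Suc (Suc m)}"
    show ?thesis
    proof (cases "m + 4 < l")
      case True
      show ?thesis
        apply (rule clq[OF nP uv, of "m+2" "m+3" "m+4"])
        using A SEu SEv ln m True by simp_all
    next
      case False
      then have "2 \<le> m" using ln by simp
      then obtain k where k: "m = k + 2" by (metis add.commute le_Suc_ex)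
      show ?thesis
        apply (rule clq[OF nP uv, of "k+2" "k+1" k])
        using A SEu SEv ln m k by simp_all
    qed
  qed
qed

lemma bullW:
  assumes v: "v \<notin> set P" and w: "w \<in> W" and n: "\<not> E w v" and idx: "a < l" "b < l" "c < l"
    "b = Suc a \<or> a = Suc b" "E v (P!a)" "\<not>E v (P!b)" "\<not>E v (P!c)"
    "(c + 2 \<le> a \<and> c + 2 \<le> b) \<or> (a + 2 \<le> c \<and> b + 2 \<le> c)"
  shows False
proof -
  have f: "E (P!a) (P!b)" "\<not> E (P!a) (P!c)" "\<not> E (P!c) (P!b)"
    using Pa[of a b] Pn[of a c] Pn[of c b] idx by auto
  have wa: "E w (P!a)" "E w (P!c)" "E w (P!b)" using W_adj[OF w] idx by auto
  show False
    apply (rule no_bull[of v "P!a" w "P!c" "P!b"])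
    using idx f wa n by (simp_all add: symc)
qed

lemma W_Np_adj:
  assumes w: "w \<in> W" and v: "v \<in> Np"
  shows "E w v"
proof (rule ccontr)
  assume n: "\<not> E w v"
  have nP: "v \<notin> set P" using v by (simp add: Np_def)
  obtain k where ln: "l = k + 7" using lform by blast
  have SE: "\<And>i. i < l \<Longrightarrow> E v (P!i) \<longleftrightarrow> i \<in> Sv v" by (simp add: Sv_def)
  from Np_types[OF v] show False
  proof (elim disjE exE conjE)
    assume A: "Sv v = {0,1}"
    show False by (rule bullW[OF nP w n, of 1 2 4]) (use A SE ln in simp_all)
  next
    assume A: "Sv v = {l-2,l-1}"
    show False by (rule bullW[OF nP w n, of "k+5" "k+4" 0]) (use A SE ln in simp_all)
  next
    assume A: "Sv v = {0,l-1}"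
    show False by (rule bullW[OF nP w n, of 0 1 3]) (use A SE ln in simp_all)
  next
    fix m assume m: "Suc (Suc m) < l" and A: "Sv v = {m, Suc m, Suc (Suc m)}"
    consider "m = 0" | "m = 1" | "m = 2" | "3 \<le> m" by linarith
    then show False
    proof cases
      case 1 show False by (rule bullW[OF nP w n, of 2 3 5]) (use A SE ln 1 in simp_all)
    next
      case 2 show False by (rule bullW[OF nP w n, of 1 0 4]) (use A SE ln 2 in simp_all)
    next
      case 3 show False by (rule bullW[OF nP w n, of 2 1 "k+6"]) (use A SE ln 3 in simp_all)
    next
      case 4
      then obtain t where t: "m = t + 1" by (metis add.commute le_Suc_ex le_trans one_le_numeral)
      show False by (rule bullW[OF nP w n, of m t 0]) (use A SE ln m 4 t in simp_all)
    qed
  qed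
qed

lemma NRgen:
  assumes v: "v \<notin> set P" and r: "r \<in> R" and rv: "E r v" and idx: "i < l" "j < l" "k < l"
    "j = Suc i \<or> i = Suc j" "k = Suc i \<or> i = Suc k" "j \<noteq> k" "E v (P!i)" "\<not>E v (P!j)"
  shows False
proof -
  have f: "E (P!i) (P!j)" "E (P!i) (P!k)" "\<not> E (P!j) (P!k)" "P!j \<noteq> P!k"
    using Pa[of i j] Pa[of i k] Pn[of j k] Peq[of j k] idx by auto
  have rn: "\<not> E r (P!i)" "\<not> E r (P!j)" "\<not> E r (P!k)" using R_nadj[OF r] idx by auto
  have rP: "r \<noteq> P!i" "P!i \<noteq> r" using R_nP[OF r] idx by auto
  have vP: "v \<noteq> P!j" "P!j \<noteq> v" using v idx by auto
  show False
  proof (cases "E v (P!k)")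
    case True
    show False
      apply (rule no_bull[of r v "P!i" "P!j" "P!k"])
      using idx f rn True rv by (simp_all add: symc)
  next
    case False
    show False
      apply (rule no_chair[of "P!i" "P!k" "P!j" v r])
      using idx f rn False rv rP by (simp_all add: symc)
  qed
qed

lemma R_Np_nadj:
  assumes r: "r \<in> R" and v: "v \<in> Np"
  shows "\<not> E r v"
proof
  assume rv: "E r v"
  have nP: "v \<notin> set P" using v by (simp add: Np_def)
  obtain k where ln: "l = k + 7" using lform by blast
  have SE: "\<And>i. i < l \<Longrightarrow> E v (P!i) \<longleftrightarrow> i \<in> Sv v" by (simp add: Sv_def)
  from Np_types[OF v] show False
  proof (elim disjE exE conjE)
    assume A: "Sv v = {0,1}"
    show False by (rule NRgen[OF nP r rv, of 1 2 0]) (use A SE ln in simp_all)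
  next
    assume A: "Sv v = {l-2,l-1}"
    show False by (rule NRgen[OF nP r rv, of "k+5" "k+4" "k+6"]) (use A SE ln in simp_all)
  next
    assume A: "Sv v = {0,l-1}"
    have f: "E v (P!0)" "E v (P!(k+6))" "\<not> E v (P!1)" using A SE ln by simp_all
    have rn: "\<not> E r (P!0)" "\<not> E r (P!1)" "\<not> E r (P!(k+6))" using R_nadj[OF r] ln by auto
    have rP: "v \<noteq> P!1" "r \<noteq> P!(k+6)" using nP R_nP[OF r] ln by auto
    show False
      apply (rule no_chair[of v r "P!(k+6)" "P!0" "P!1"])
      using f rn rv ln rP by (simp_all add: symc Pa Pn Peq)
  next
    fix m assume m: "Suc (Suc m) < l" and A: "Sv v = {m, Suc m, Suc (Suc m)}"
    show False
    proof (cases "m + 3 < l")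
      case True
      show False by (rule NRgen[OF nP r rv, of "m+2" "m+3" "m+1"]) (use A SE ln m True in simp_all)
    next
      case False
      then have "1 \<le> m" using ln by simp
      then obtain t where t: "m = t + 1" by (metis add.commute le_Suc_ex)
      show False by (rule NRgen[OF nP r rv, of m t "m+1"]) (use A SE ln m t in simp_all)
    qed
  qed
qed

lemma closure:
  assumes r: "r \<in> R" and r': "r' \<in> R" and rr: "E r r'" and w: "w \<in> W" and wr: "E w r"
  shows "E w r'"
proof (rule ccontr)
  assume n: "\<not> E w r'"
  have l2: "2 < l" using len7 by linarith
  have wa: "E w (P!0)" "E w (P!2)" using W_adj[OF w l0] W_adj[OF w l2] by auto
  have rn: "\<not> E r (P!0)" "\<not> E r (P!2)" "\<not> E r' (P!0)" "\<not> E r' (P!2)"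
    using R_nadj[OF r l0] R_nadj[OF r l2] R_nadj[OF r' l0] R_nadj[OF r' l2] by auto
  have f: "\<not> E (P!0) (P!2)" "P!0 \<noteq> P!2" using Pn[OF l0 l2] Peq[OF l0 l2] by auto
  have wr': "w \<noteq> r'" using wa(1) rn(3) by auto
  show False
    apply (rule no_chair[of w "P!0" "P!2" r r'])
    using wa rn f n rr wr wr' by (simp_all add: symc)
qed

lemma bullB:
  assumes u: "u \<in> W" and w: "w \<in> W" and uw: "E u w" and r1: "r1 \<in> R" and r2: "r2 \<in> R"
    and a: "E u r1" "\<not> E w r1" "E w r2" "\<not> E u r2"
  shows False
proof -
  have n12: "\<not> E r1 r2" using closure[OF r1 r2 _ u a(1)] a(4) by blast
  have wa: "E w (P!0)" "E u (P!0)" using W_adj[OF w l0] W_adj[OF u l0] by auto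
  have rn: "\<not> E r1 (P!0)" "\<not> E r2 (P!0)" using R_nadj[OF r1 l0] R_nadj[OF r2 l0] by auto
  show False
    apply (rule no_bull[of r1 u w r2 "P!0"])
    using wa rn n12 a uw by (simp_all add: symc)
qed

lemma W_C0_adj: "w \<in> W \<Longrightarrow> y \<in> C0 \<Longrightarrow> E w y"
  using W_adj W_Np_adj by (auto simp: C0_def in_set_conv_nth)

lemma C0_out:
  assumes y: "y \<in> C0" and z: "z \<notin> C0" and yz: "E y z"
  shows "z \<in> W"
proof -
  have zV: "z \<in> V" using inV2[OF yz] .
  have zR: "z \<notin> R"
  proof
    assume zR: "z \<in> R"
    show False
    proof (cases "y \<in> set P")
      case True
      then obtain i where "i < l" "y = P!i" by (auto simp: in_set_conv_nth)
      then show False using R_nadj[OF zR] yz sym by blast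
    next
      case False
      then have "y \<in> Np" using y by (simp add: C0_def)
      then show False using R_Np_nadj[OF zR] yz sym by blast
    qed
  qed
  show ?thesis using V_cases[OF zV] zR z by (auto simp: C0_def)
qed

end

definition lst :: "'a set \<Rightarrow> 'a list" where "lst A = (SOME xs. set xs = A \<and> distinct xs)"
lemma lst: "finite A \<Longrightarrow> set (lst A) = A \<and> distinct (lst A)"
  unfolding lst_def by (rule someI_ex) (rule finite_distinct_list)

lemma succ_clique: "distinct xs \<Longrightarrow> (\<And>x y. x \<in> set xs \<Longrightarrow> y \<in> set xs \<Longrightarrow> x \<noteq> y \<Longrightarrow> R x y) \<Longrightarrow> successively R xs"
proof (induction xs)
  case (Cons a xs)
  then show ?case by (cases xs) (auto simp: successively_Cons)
qed simp

context mpath begin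

definition "TA = {v \<in> Np. Sv v = {0,1}}"
definition "TB = {v \<in> Np. Sv v = {l-2,l-1}}"
definition "TC = {v \<in> Np. Sv v = {0,l-1}}"
definition "TM m = {v \<in> Np. Sv v = {m, Suc m, Suc (Suc m)}}"

lemma fin_sub: assumes "T \<subseteq> Np" shows "finite T"
proof -
  have "T \<subseteq> V" using assms Np_V by blast
  then show ?thesis by (rule finite_subset[OF _ finV])
qed

lemma lst_T:
  assumes "T \<subseteq> Np" "\<And>u v. u \<in> T \<Longrightarrow> v \<in> T \<Longrightarrow> Sv u = Sv v"
  shows "set (lst T) = T" "distinct (lst T)" "successively E (lst T)"
proof -
  have f: "finite T" using fin_sub[OF assms(1)] .
  show s: "set (lst T) = T" and d: "distinct (lst T)" using lst[OF f] by auto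
  show "successively E (lst T)"
  proof (rule succ_clique[OF d])
    fix x y assume xy: "x \<in> set (lst T)" "y \<in> set (lst T)" "x \<noteq> y"
    then have "x \<in> T" "y \<in> T" using s by auto
    then show "E x y" using same_type_adj[OF _ _ xy(3)] assms by blast
  qed
qed

lemma TA: "set (lst TA) = TA" "distinct (lst TA)" "successively E (lst TA)"
  by (rule lst_T; auto simp: TA_def)+
lemma TB: "set (lst TB) = TB" "distinct (lst TB)" "successively E (lst TB)"
  by (rule lst_T; auto simp: TB_def)+
lemma TC: "set (lst TC) = TC" "distinct (lst TC)" "successively E (lst TC)"
  by (rule lst_T; auto simp: TC_def)+
lemma TM: "set (lst (TM m)) = TM m" "distinct (lst (TM m))" "successively E (lst (TM m))"
  by (rule lst_T; auto simp: TM_def)+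

lemma T_E: "Sv v = S \<Longrightarrow> i \<in> S \<Longrightarrow> E v (P!i)" by (auto simp: Sv_def)

fun F :: "nat \<Rightarrow> 'a list" where
  "F 0 = lst TA @ [P!0]"
| "F (Suc k) = F k @ lst (TM k) @ [P!(Suc k)]"

lemma TM_nP: "v \<in> TM m \<Longrightarrow> v \<notin> set P" by (simp add: TM_def Np_def)
lemma TA_nP: "v \<in> TA \<Longrightarrow> v \<notin> set P" by (simp add: TA_def Np_def)
lemma TB_nP: "v \<in> TB \<Longrightarrow> v \<notin> set P" by (simp add: TB_def Np_def)
lemma TC_nP: "v \<in> TC \<Longrightarrow> v \<notin> set P" by (simp add: TC_def Np_def)

lemma TM_TA: "v \<in> TM m \<Longrightarrow> v \<notin> TA"
proof
  assume "v \<in> TM m" "v \<in> TA"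
  then have "{m, Suc m, Suc (Suc m)} = ({0,1}::nat set)" by (auto simp: TM_def TA_def)
  then have "Suc (Suc m) \<in> ({0,1}::nat set)" by blast
  then show False by simp
qed
lemma TM_TM: "v \<in> TM m \<Longrightarrow> v \<in> TM k \<Longrightarrow> m = k"
proof -
  assume "v \<in> TM m" "v \<in> TM k"
  then have e: "{m, Suc m, Suc (Suc m)} = {k, Suc k, Suc (Suc k)}" by (auto simp: TM_def)
  then have "m \<in> {k, Suc k, Suc (Suc k)}" "k \<in> {m, Suc m, Suc (Suc m)}" by blast+
  then show "m = k" by auto
qed
lemma TB_other: "v \<in> TB \<Longrightarrow> v \<notin> TA \<and> (\<forall>m. v \<notin> TM m)"
proof -
  assume v: "v \<in> TB"
  have c2: "card {l-2, l-1} = 2" using len7 by simp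
  have "v \<notin> TA"
  proof
    assume "v \<in> TA" then have "{l-2,l-1} = ({0,1}::nat set)" using v by (auto simp: TA_def TB_def)
    then have "l - 1 \<in> ({0,1}::nat set)" by blast
    then show False using len7 by simp
  qed
  moreover have "v \<notin> TM m" for m
  proof
    assume "v \<in> TM m" then have "{l-2,l-1} = {m, Suc m, Suc (Suc m)}" using v by (auto simp: TM_def TB_def)
    then have "card {m, Suc m, Suc (Suc m)} = 2" using c2 by simp
    then show False by simp
  qed
  ultimately show ?thesis by blast
qed
lemma TC_other: "v \<in> TC \<Longrightarrow> v \<notin> TA \<and> v \<notin> TB \<and> (\<forall>m. v \<notin> TM m)"
proof -
  assume v: "v \<in> TC"
  have c2: "card {0, l-1} = 2" using len7 by simp
  have "v \<notin> TA"
  proof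
    assume "v \<in> TA" then have "{0,l-1} = ({0,1}::nat set)" using v by (auto simp: TA_def TC_def)
    then have "l - 1 \<in> ({0,1}::nat set)" by blast
    then show False using len7 by simp
  qed
  moreover have "v \<notin> TB"
  proof
    assume "v \<in> TB" then have "{0,l-1} = {l-2,l-1}" using v by (auto simp: TB_def TC_def)
    then have "0 \<in> {l-2,l-1}" by blast
    then show False using len7 by simp
  qed
  moreover have "v \<notin> TM m" for m
  proof
    assume "v \<in> TM m" then have "{0,l-1} = {m, Suc m, Suc (Suc m)}" using v by (auto simp: TM_def TC_def)
    then have "card {m, Suc m, Suc (Suc m)} = 2" using c2 by simp
    then show False by simp
  qed
  ultimately show ?thesis by blast
qed

lemma F_inv:
  "k \<le> l - 2 \<Longrightarrow> F k \<noteq> [] \<and> last (F k) = P!k \<and> successively E (F k) \<and> distinct (F k) \<and>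
     set (F k) = TA \<union> (\<lambda>i. P!i) ` {..k} \<union> (\<Union>m<k. TM m)"
proof (induction k)
  case 0
  have "E (last (lst TA)) (P!0)" if "lst TA \<noteq> []"
  proof -
    have "last (lst TA) \<in> TA" using last_in_set[OF that] TA by simp
    then show ?thesis using T_E[of _ "{0,1}" 0] by (simp add: TA_def)
  qed
  then have "successively E (lst TA @ [P!0])"
    using TA by (auto simp: successively_append_iff)
  moreover have "P!0 \<notin> TA" using TA_nP nth_mem[OF l0] by blast
  then have "distinct (lst TA @ [P!0])" using TA by auto
  ultimately show ?case using TA by auto
next
  case (Suc k)
  then have IH: "F k \<noteq> [] \<and> last (F k) = P!k \<and> successively E (F k) \<and> distinct (F k) \<and>
     set (F k) = TA \<union> (\<lambda>i. P!i) ` {..k} \<union> (\<Union>m<k. TM m)" by simp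
  have kl: "Suc (Suc k) < l" using Suc.prems len7 by linarith
  let ?M = "lst (TM k) @ [P!(Suc k)]"
  have pk: "P!(Suc k) \<in> set P" using kl by simp
  have "E (last (lst (TM k))) (P!Suc k)" if "lst (TM k) \<noteq> []"
  proof -
    have "last (lst (TM k)) \<in> TM k" using last_in_set[OF that] TM by simp
    then show ?thesis using T_E[of _ "{k, Suc k, Suc (Suc k)}" "Suc k"] by (simp add: TM_def)
  qed
  then have s1: "successively E ?M"
    using TM[of k] by (auto simp: successively_append_iff)
  have j1: "E (P!k) (hd ?M)"
  proof (cases "lst (TM k)")
    case Nil then show ?thesis using Pa[of k "Suc k"] kl by simp
  next
    case (Cons x xs)
    then have "x \<in> TM k" using TM[of k] by (metis list.set_intros(1))
    then have "E x (P!k)" using T_E[of x "{k, Suc k, Suc (Suc k)}" k] by (auto simp: TM_def)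
    then show ?thesis using Cons by (simp add: symc)
  qed
  have "P!(Suc k) \<notin> TM k" using TM_nP pk by blast
  then have d1: "distinct ?M" using TM[of k] by auto
  have disj: "set (F k) \<inter> set ?M = {}"
  proof -
    have "x \<notin> set (F k)" if x: "x \<in> TM k" for x
    proof
      assume "x \<in> set (F k)"
      then have "x \<in> TA \<or> x \<in> (\<lambda>i. P!i) ` {..k} \<or> (\<exists>m<k. x \<in> TM m)" using IH by auto
      moreover have "x \<notin> TA" using TM_TA[OF x] .
      moreover have "x \<notin> (\<lambda>i. P!i) ` {..k}" using TM_nP[OF x] kl by auto
      moreover have "\<not>(\<exists>m<k. x \<in> TM m)" using TM_TM[OF x] by auto
      ultimately show False by blast
    qed
    moreover have "P!(Suc k) \<notin> set (F k)"
    proof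
      assume "P!(Suc k) \<in> set (F k)"
      then have "P!(Suc k) \<in> TA \<or> P!(Suc k) \<in> (\<lambda>i. P!i) ` {..k} \<or> (\<exists>m<k. P!(Suc k) \<in> TM m)" using IH by auto
      moreover have "P!(Suc k) \<notin> TA" using TA_nP pk by blast
      moreover have "\<not>(\<exists>m<k. P!(Suc k) \<in> TM m)" using TM_nP pk by blast
      moreover have "P!(Suc k) \<notin> (\<lambda>i. P!i) ` {..k}" using Peq kl by auto
      ultimately show False by blast
    qed
    ultimately show ?thesis using TM[of k] by auto
  qed
  have "successively E (F (Suc k))" using IH s1 j1 by (simp add: successively_append_iff)
  moreover have "distinct (F (Suc k))" using IH d1 disj by simp
  moreover have "set (F (Suc k)) = TA \<union> (\<lambda>i. P!i) ` {..Suc k} \<union> (\<Union>m<Suc k. TM m)"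
    using IH TM[of k] by (auto simp: atMost_Suc lessThan_Suc)
  ultimately show ?case by simp
qed

definition "H0 = F (l-2) @ lst TB @ [P!(l-1)] @ lst TC"

lemma H0: "successively E H0 \<and> distinct H0 \<and> set H0 = C0"
proof -
  obtain n where ln: "l = n + 7" using lform by blast
  have e: "l - 1 = n + 6" "l - 2 = n + 5" using ln by simp_all
  have FI: "F (l-2) \<noteq> [] \<and> last (F (l-2)) = P!(l-2) \<and> successively E (F (l-2)) \<and> distinct (F (l-2)) \<and>
     set (F (l-2)) = TA \<union> (\<lambda>i. P!i) ` {..l-2} \<union> (\<Union>m<l-2. TM m)" using F_inv by simp
  let ?B = "lst TB @ [P!(l-1)] @ lst TC"
  have pl: "P!(l-1) \<in> set P" "P!(l-2) \<in> set P" using ln by simp_all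
  have j1: "E (last (lst TB)) (P!(l-1))" if "lst TB \<noteq> []"
  proof -
    have "last (lst TB) \<in> TB" using last_in_set[OF that] TB by simp
    then show ?thesis using T_E[of _ "{l-2,l-1}" "l-1"] by (simp add: TB_def)
  qed
  have j2: "E (P!(l-1)) (hd (lst TC))" if "lst TC \<noteq> []"
  proof -
    have "hd (lst TC) \<in> TC" using hd_in_set[OF that] TC by simp
    then have "E (hd (lst TC)) (P!(l-1))" using T_E[of _ "{0,l-1}" "l-1"] by (simp add: TC_def)
    then show ?thesis by (rule sym)
  qed
  have j3: "E (P!(l-2)) (hd ?B)"
  proof (cases "lst TB")
    case Nil then show ?thesis using Pa[of "l-2" "l-1"] ln by simp
  next
    case (Cons x xs)
    then have "x \<in> TB" using TB by (metis list.set_intros(1))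
    then have "E x (P!(l-2))" using T_E[of x "{l-2,l-1}" "l-2"] by (simp add: TB_def)
    then show ?thesis using Cons by (simp add: symc)
  qed
  have "successively E (P!(l-1) # lst TC)" using TC(3) j2 by (auto simp: successively_Cons)
  then have sB: "successively E ?B" using TB j1 by (auto simp: successively_append_iff)
  have "P!(l-1) \<notin> TB" "P!(l-1) \<notin> TC" using TB_nP TC_nP pl by blast+
  moreover have "TB \<inter> TC = {}" using TC_other by blast
  ultimately have dB: "distinct ?B" using TB TC by auto
  have disj: "set (F (l-2)) \<inter> set ?B = {}"
  proof -
    have "x \<notin> set (F (l-2))" if x: "x \<in> TB \<union> TC" for x
    proof
      assume "x \<in> set (F (l-2))"
      then have "x \<in> TA \<or> x \<in> (\<lambda>i. P!i) ` {..l-2} \<or> (\<exists>m<l-2. x \<in> TM m)" using FI by auto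
      moreover have "x \<notin> set P" using x TB_nP TC_nP by blast
      moreover have "\<And>i. i \<le> l - 2 \<Longrightarrow> P!i \<in> set P" using ln by simp
      ultimately show False using x TB_other TC_other by auto
    qed
    moreover have "P!(l-1) \<notin> set (F (l-2))"
    proof
      assume "P!(l-1) \<in> set (F (l-2))"
      then have "P!(l-1) \<in> TA \<or> P!(l-1) \<in> (\<lambda>i. P!i) ` {..l-2} \<or> (\<exists>m<l-2. P!(l-1) \<in> TM m)" using FI by auto
      moreover have "P!(l-1) \<notin> TA" using TA_nP pl by blast
      moreover have "\<not>(\<exists>m<l-2. P!(l-1) \<in> TM m)" using TM_nP pl by blast
      moreover have "P!(l-1) \<notin> (\<lambda>i. P!i) ` {..l-2}" using Peq ln by auto
      ultimately show False by blast
    qed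
    ultimately show ?thesis using TB TC by auto
  qed
  have sH: "successively E H0" unfolding H0_def using FI sB j3 by (simp add: successively_append_iff)
  have dH: "distinct H0" unfolding H0_def using FI dB disj by simp
  have setH: "set H0 = TA \<union> (\<lambda>i. P!i) ` {..l-2} \<union> (\<Union>m<l-2. TM m) \<union> TB \<union> {P!(l-1)} \<union> TC"
    unfolding H0_def using FI TB TC by auto
  have "set H0 = C0"
  proof
    show "set H0 \<subseteq> C0" unfolding setH C0_def using ln
      by (auto simp: TA_def TB_def TC_def TM_def)
    show "C0 \<subseteq> set H0"
    proof
      fix x assume "x \<in> C0"
      then consider "x \<in> set P" | "x \<in> Np" by (auto simp: C0_def)
      then show "x \<in> set H0"
      proof cases
        case 1
        then obtain i where i: "i < l" "x = P!i" by (auto simp: in_set_conv_nth)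
        then show ?thesis unfolding setH by (cases "i = l - 1") auto
      next
        case 2
        from Np_types[OF this] show ?thesis unfolding setH
        proof (elim disjE exE conjE)
          fix m assume "Suc (Suc m) < l" "Sv x = {m, Suc m, Suc (Suc m)}"
          then have "x \<in> TM m" "m < l - 2" using 2 by (auto simp: TM_def)
          then show "x \<in> TA \<union> (\<lambda>i. P!i) ` {..l-2} \<union> (\<Union>m<l-2. TM m) \<union> TB \<union> {P!(l-1)} \<union> TC" by blast
        qed (use 2 in \<open>auto simp: TA_def TB_def TC_def\<close>)
      qed
    qed
  qed
  then show ?thesis using sH dH by blast
qed

end

lemma ip_append:
  assumes "is_path V E xs" "is_path V E ys" "set xs \<inter> set ys = {}" "E (last xs) (hd ys)"
  shows "is_path V E (xs @ ys)"
  using assms by (auto simp: is_path_succ successively_append_iff)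

lemma ip_take: "is_path V E xs \<Longrightarrow> 0 < n \<Longrightarrow> is_path V E (take n xs)"
  unfolding is_path_succ
  by (metis append_take_drop_id distinct_append successively_append_iff set_take_subset subset_trans take_eq_Nil neq0_conv)

lemma ip_drop: "is_path V E xs \<Longrightarrow> n < length xs \<Longrightarrow> is_path V E (drop n xs)"
  unfolding is_path_succ
  by (metis append_take_drop_id distinct_append successively_append_iff set_drop_subset subset_trans drop_eq_Nil not_le)

lemma ip_insert:
  assumes p: "is_path V E xs" and i: "i < length xs" and y: "y \<in> V" "y \<notin> set xs"
    and e1: "E (xs!i) y" and e2: "Suc i < length xs \<Longrightarrow> E y (xs!Suc i)"
  shows "is_path V E (take (Suc i) xs @ y # drop (Suc i) xs)"
proof -
  have t: "is_path V E (take (Suc i) xs)" using ip_take[OF p] by simp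
  have l: "last (take (Suc i) xs) = xs!i" using i by (simp add: take_Suc_conv_app_nth)
  have yd: "is_path V E (y # drop (Suc i) xs)"
  proof (cases "Suc i < length xs")
    case True
    have d: "is_path V E (drop (Suc i) xs)" using ip_drop[OF p True] .
    have "hd (drop (Suc i) xs) = xs!Suc i" using True by (simp add: hd_drop_conv_nth)
    then show ?thesis using d y e2[OF True] True
      by (auto simp: is_path_succ successively_Cons dest: in_set_dropD)
  next
    case False
    then have "drop (Suc i) xs = []" by simp
    then show ?thesis using y by (simp add: is_path_def)
  qed
  have "set (take (Suc i) xs) \<inter> set (y # drop (Suc i) xs) = {}"
    using p y by (auto simp: is_path_def dest: in_set_takeD)
       (metis append_take_drop_id disjoint_iff distinct_append)
  then show ?thesis using ip_append[OF t yd] l e1 by simp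
qed

lemma longestD: "longest_path V E Q \<Longrightarrow> is_path V E q \<Longrightarrow> length q \<le> length Q"
  by (simp add: longest_path_def)

context mpath begin

lemma C0_V: "C0 \<subseteq> V" using Pset Np_V by (auto simp: C0_def)
lemma C0_fin: "finite C0" using finite_subset[OF C0_V finV] .

lemma lemX:
  assumes Q: "longest_path V E Q" and meet: "set Q \<inter> C0 \<noteq> {}"
  shows "C0 \<subseteq> set Q"
proof (rule ccontr)
  assume "\<not> C0 \<subseteq> set Q"
  then obtain x where x: "x \<in> C0" "x \<notin> set Q" by blast
  have Qp: "is_path V E Q" using Q by (simp add: longest_path_def)
  have Qd: "distinct Q" and QV: "set Q \<subseteq> V" and Qa: "\<And>i. Suc i < length Q \<Longrightarrow> E (Q!i) (Q!Suc i)"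
    using Qp by (auto simp: is_path_def)
  have Hs: "successively E H0" and Hd: "distinct H0" and Hset: "set H0 = C0" using H0 by auto
  have Ha: "\<And>i. Suc i < length H0 \<Longrightarrow> E (H0!i) (H0!Suc i)" using Hs by (simp add: succ_nth)
  define n where "n = length Q"
  define cnt where "cnt i = length (filter (\<lambda>y. y \<in> C0) (take i Q))" for i
  have cnt_Suc: "cnt (Suc i) = cnt i + (if Q!i \<in> C0 then 1 else 0)" if "i < n" for i
    using that by (simp add: cnt_def n_def take_Suc_conv_app_nth)
  have cnt_mono: "cnt i \<le> cnt j" if "i \<le> j" "j \<le> n" for i j
    using that
  proof (induction j)
    case (Suc j)
    then show ?case by (cases "i = Suc j") (auto simp: cnt_Suc le_Suc_eq)
  qed simp
  have cnt_strict: "Suc (cnt i) \<le> cnt j" if "i < j" "j \<le> n" "Q!i \<in> C0" for i j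
    using cnt_mono[of "Suc i" j] cnt_Suc[of i] that by simp
  define s where "s = cnt n"
  have s_card: "s = card (set Q \<inter> C0)"
  proof -
    have "s = length (filter (\<lambda>y. y \<in> C0) Q)" by (simp add: s_def cnt_def n_def)
    also have "\<dots> = card (set (filter (\<lambda>y. y \<in> C0) Q))"
      using distinct_card[OF distinct_filter[OF Qd, of "\<lambda>y. y \<in> C0"]] by simp
    also have "set (filter (\<lambda>y. y \<in> C0) Q) = set Q \<inter> C0" by auto
    finally show ?thesis .
  qed
  have sh: "s < length H0"
  proof -
    have "set Q \<inter> C0 \<subset> C0" using x by blast
    then have "card (set Q \<inter> C0) < card C0" using C0_fin psubset_card_mono by blast
    then show ?thesis using s_card Hd Hset distinct_card by metis
  qed
  have cnt_lt: "cnt i < s" if "i < n" "Q!i \<in> C0" for i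
    using cnt_strict[of i n] that s_def by simp
  define g where "g i = (if Q!i \<in> C0 then H0!(cnt i) else Q!i)" for i
  define Q1 where "Q1 = map g [0..<n]"
  have Q1l: "length Q1 = n" by (simp add: Q1_def)
  have Q1n: "\<And>i. i < n \<Longrightarrow> Q1!i = g i" by (simp add: Q1_def)
  have gC0: "\<And>i. i < n \<Longrightarrow> g i \<in> C0 \<longleftrightarrow> Q!i \<in> C0"
    using Hset cnt_lt sh by (auto simp: g_def) (metis nth_mem less_trans)
  have adjW: "E (Q!i) (Q!j) \<Longrightarrow> Q!i \<in> C0 \<Longrightarrow> Q!j \<notin> C0 \<Longrightarrow> Q!j \<in> W" for i j
    using C0_out by blast
  have Q1p: "is_path V E Q1"
    unfolding is_path_def
  proof (intro conjI allI impI)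
    have "0 < n" using meet by (auto simp: n_def)
    then show "Q1 \<noteq> []" using Q1l by auto
    show "distinct Q1"
    proof (subst distinct_conv_nth, intro allI impI)
      fix i j assume ij: "i < length Q1" "j < length Q1" "i \<noteq> j"
      then have ij': "i < n" "j < n" using Q1l by auto
      show "Q1!i \<noteq> Q1!j"
      proof (cases "Q!i \<in> C0"; cases "Q!j \<in> C0")
        assume a: "Q!i \<in> C0" "Q!j \<in> C0"
        have "cnt i \<noteq> cnt j"
        proof (cases "i < j")
          case True then show ?thesis using cnt_strict[of i j] ij' a by simp
        next
          case False then have "j < i" using ij by simp
          then show ?thesis using cnt_strict[of j i] ij' a by simp
        qed
        moreover have "cnt i < length H0" "cnt j < length H0" using cnt_lt ij' a sh by (auto intro: less_trans)
        ultimately show ?thesis using a ij' Hd Q1n by (simp add: g_def nth_eq_iff_index_eq)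
      next
        assume a: "Q!i \<in> C0" "Q!j \<notin> C0"
        then show ?thesis using gC0 ij' Q1n by metis
      next
        assume a: "Q!i \<notin> C0" "Q!j \<in> C0"
        then show ?thesis using gC0 ij' Q1n by metis
      next
        assume a: "Q!i \<notin> C0" "Q!j \<notin> C0"
        then show ?thesis using ij' ij(3) Qd Q1n by (simp add: g_def nth_eq_iff_index_eq n_def)
      qed
    qed
    show "set Q1 \<subseteq> V"
    proof
      fix z assume "z \<in> set Q1"
      then obtain i where i: "i < n" "z = g i" using Q1n Q1l by (metis in_set_conv_nth)
      show "z \<in> V"
      proof (cases "Q!i \<in> C0")
        case True then have "z \<in> C0" using gC0 i by simp
        then show ?thesis using C0_V by blast
      next
        case False
        have "Q!i \<in> V" using i QV nth_mem[of i Q] n_def by blast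
        then show ?thesis using i False by (simp add: g_def)
      qed
    qed
    fix i assume i: "Suc i < length Q1"
    then have i': "Suc i < n" using Q1l by simp
    have eq: "E (Q!i) (Q!Suc i)" using Qa i' n_def by simp
    show "E (Q1!i) (Q1!Suc i)"
    proof (cases "Q!i \<in> C0"; cases "Q!Suc i \<in> C0")
      assume a: "Q!i \<in> C0" "Q!Suc i \<in> C0"
      have "cnt (Suc i) = Suc (cnt i)" using cnt_Suc[of i] a i' by simp
      moreover have "Suc (cnt i) < length H0" using cnt_lt[of "Suc i"] a i' sh calculation by simp
      ultimately show ?thesis using Ha a i' Q1n by (simp add: g_def)
    next
      assume a: "Q!i \<in> C0" "Q!Suc i \<notin> C0"
      then have w: "Q!Suc i \<in> W" using adjW eq by blast
      have "g i \<in> C0" using gC0 a i' by simp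
      then have "E (Q!Suc i) (g i)" using W_C0_adj w by blast
      then show ?thesis using a i' Q1n sym by (simp add: g_def)
    next
      assume a: "Q!i \<notin> C0" "Q!Suc i \<in> C0"
      then have w: "Q!i \<in> W" using adjW[of "Suc i" i] eq sym by blast
      have "g (Suc i) \<in> C0" using gC0 a i' by simp
      then have "E (Q!i) (g (Suc i))" using W_C0_adj w by blast
      then show ?thesis using a i' Q1n by (simp add: g_def)
    next
      assume a: "Q!i \<notin> C0" "Q!Suc i \<notin> C0"
      then show ?thesis using eq i' Q1n by (simp add: g_def)
    qed
  qed
  define I where "I = {i. i < n \<and> Q!i \<in> C0}"
  have If: "finite I" "I \<noteq> {}" using meet by (auto simp: I_def n_def in_set_conv_nth)
  define im where "im = Max I"
  have im: "im < n" "Q!im \<in> C0" using Max_in[OF If] im_def I_def by auto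
  have imax: "\<And>j. im < j \<Longrightarrow> j < n \<Longrightarrow> Q!j \<notin> C0" using Max_ge[OF If(1)] im_def I_def by fastforce
  have cnt_const: "cnt j = cnt (Suc im)" if "Suc im \<le> j" "j \<le> n" for j
    using that
  proof (induction j)
    case (Suc j)
    then show ?case using cnt_Suc[of j] imax[of j] by (cases "Suc im = Suc j") (auto simp: le_Suc_eq)
  qed simp
  have sim: "s = Suc (cnt im)" using cnt_const[of n] im cnt_Suc[of im] s_def by simp
  define y where "y = H0!s"
  have yC0: "y \<in> C0" using sh Hset y_def by auto
  have yQ1: "y \<notin> set Q1"
  proof
    assume "y \<in> set Q1"
    then obtain i where i: "i < n" "y = g i" using Q1n Q1l by (metis in_set_conv_nth)
    show False
    proof (cases "Q!i \<in> C0")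
      case True
      then have "H0!s = H0!(cnt i)" using i y_def by (simp add: g_def)
      moreover have "cnt i < s" using cnt_lt i True by simp
      ultimately show False using Hd sh by (simp add: nth_eq_iff_index_eq)
    next
      case False then show False using i yC0 by (simp add: g_def)
    qed
  qed
  have e1: "E (Q1!im) y" using Ha[of "cnt im"] sh sim im Q1n by (simp add: g_def y_def)
  have e2: "E y (Q1!Suc im)" if "Suc im < length Q1"
  proof -
    have si: "Suc im < n" using that Q1l by simp
    have nc: "Q!Suc im \<notin> C0" using imax[of "Suc im"] si by simp
    have "E (Q!im) (Q!Suc im)" using Qa si n_def by simp
    then have "Q!Suc im \<in> W" using adjW im(2) nc by blast
    then have "E (Q!Suc im) y" using W_C0_adj yC0 by blast
    then show ?thesis using sym nc si Q1n by (simp add: g_def)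
  qed
  have "is_path V E (take (Suc im) Q1 @ y # drop (Suc im) Q1)"
    by (rule ip_insert[OF Q1p _ _ yQ1 e1 e2]) (use im Q1l yC0 C0_V in auto)
  then have "length (take (Suc im) Q1 @ y # drop (Suc im) Q1) \<le> n" using longestD[OF Q] n_def by blast
  then show False using im Q1l by simp
qed

end

context mpath begin

lemma closure_list:
  "successively E xs \<Longrightarrow> set xs \<subseteq> R \<Longrightarrow> xs \<noteq> [] \<Longrightarrow> w \<in> W \<Longrightarrow> E w (last xs) \<Longrightarrow> \<forall>z\<in>set xs. E w z"
proof (induction xs)
  case (Cons a xs)
  show ?case
  proof (cases xs)
    case Nil then show ?thesis using Cons by simp
  next
    case (Cons b ys)
    have xne: "xs \<noteq> []" using Cons by simp
    have s1: "successively E xs" using Cons.prems(1) xne by (simp add: successively_Cons)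
    have s2: "set xs \<subseteq> R" using Cons.prems(2) by simp
    have s3: "E w (last xs)" using Cons.prems(5) xne by simp
    have IH: "\<forall>z\<in>set xs. E w z" by (rule Cons.IH[OF s1 s2 xne Cons.prems(4) s3])
    have "E a b" using Cons.prems(1) Cons by simp
    then have ba: "E b a" by (rule sym)
    have wb: "E w b" using IH Cons by simp
    have ab: "a \<in> R" "b \<in> R" using Cons.prems(2) Cons by auto
    have "E w a" by (rule closure[OF ab(2) ab(1) ba Cons.prems(4) wb])
    then show ?thesis using IH by simp
  qed
qed simp

lemma RW:
  assumes r: "r \<in> R"
  shows "\<exists>w\<in>W. E w r"
proof -
  have rV: "r \<in> V" using r R_V by blast
  have p0V: "P!0 \<in> V" using PV l0 by blast
  obtain q where q: "is_path V E q" "hd q = r" "last q = P!0"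
    using conn rV p0V unfolding connected_graph_def by blast
  have qne: "q \<noteq> []" using q by (simp add: is_path_def)
  have ex: "\<exists>i. i < length q \<and> q!i \<notin> R"
  proof (intro exI conjI)
    show "length q - 1 < length q" using qne by simp
    have "q!(length q - 1) = P!0" using q(3) qne by (simp add: last_conv_nth)
    then show "q!(length q - 1) \<notin> R" using R_nP nth_mem[OF l0] by metis
  qed
  define J where "J = (LEAST i. i < length q \<and> q!i \<notin> R)"
  have J: "J < length q" "q!J \<notin> R" using LeastI_ex[OF ex] J_def by auto
  have Jmin: "\<And>i. i < J \<Longrightarrow> q!i \<in> R" using not_less_Least J_def J(1) by fastforce
  have q0: "q!0 = r" using q(2) qne by (simp add: hd_conv_nth)
  have J0: "0 < J"
  proof (rule ccontr)
    assume "\<not> 0 < J" then have "J = 0" by simp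
    then show False using J(2) q0 r by simp
  qed
  then obtain J' where J': "J = Suc J'" using gr0_implies_Suc by blast
  have qs: "successively E q" using q(1) by (simp add: is_path_succ)
  have eJ': "E (q!J') (q!J)" using qs J J' by (simp add: succ_nth)
  have eJ: "E (q!(J-1)) (q!J)" using eJ' J' by simp
  have RJ: "q!(J-1) \<in> R" using Jmin J0 by simp
  have qJV: "q!J \<in> V" using q(1) J by (auto simp: is_path_def)
  have "q!J \<in> W"
  proof -
    have "q!J \<notin> set P"
    proof
      assume "q!J \<in> set P"
      then obtain i where "i < l" "q!J = P!i" by (auto simp: in_set_conv_nth)
      then show False using R_nadj[OF RJ] eJ by simp
    qed
    moreover have "q!J \<notin> Np" using R_Np_nadj[OF RJ] eJ by blast
    ultimately show ?thesis using V_cases[OF qJV] J(2) by blast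
  qed
  moreover have "\<forall>z\<in>set (take J q). E (q!J) z"
  proof (rule closure_list)
    show "successively E (take J q)" using qs by (metis append_take_drop_id successively_append_iff)
    show "set (take J q) \<subseteq> R" using Jmin by (auto simp: in_set_conv_nth)
    show "take J q \<noteq> []" using J0 qne by simp
    show "q!J \<in> W" by fact
    have "last (take J q) = q!(J-1)" using J J' by (simp add: take_Suc_conv_app_nth)
    then show "E (q!J) (last (take J q))" using sym[OF eJ] by simp
  qed
  moreover have "r \<in> set (take J q)"
  proof -
    have "take J q ! 0 = r" using J0 q0 by simp
    moreover have "0 < length (take J q)" using J0 J(1) by simp
    ultimately show ?thesis using nth_mem by metis
  qed
  ultimately show ?thesis by blast
qed

lemma QR: "x \<in> V \<Longrightarrow> x \<notin> C0 \<Longrightarrow> x \<notin> W \<Longrightarrow> x \<in> R"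
  using V_cases by (auto simp: C0_def)

lemma append_longer:
  assumes Q: "longest_path V E Q" and y: "y \<in> V" "y \<notin> set Q" and e: "E (last Q) y"
  shows False
proof -
  have Qp: "is_path V E Q" using Q by (simp add: longest_path_def)
  have ne: "Q \<noteq> []" using Qp by (simp add: is_path_def)
  have i: "length Q - 1 < length Q" using ne by simp
  have "E (Q!(length Q - 1)) y" using e ne by (simp add: last_conv_nth)
  then have "is_path V E (take (Suc (length Q - 1)) Q @ y # drop (Suc (length Q - 1)) Q)"
    by (rule ip_insert[OF Qp i y]) simp
  then have "length (take (Suc (length Q - 1)) Q @ y # drop (Suc (length Q - 1)) Q) \<le> length Q"
    using longestD[OF Q] by blast
  then show False using ne by simp
qed

lemma insert_longer:
  assumes Q: "longest_path V E Q" and i: "Suc i < length Q" and y: "y \<in> V" "y \<notin> set Q"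
    and e: "E (Q!i) y" "E y (Q!Suc i)"
  shows False
proof -
  have Qp: "is_path V E Q" using Q by (simp add: longest_path_def)
  have "is_path V E (take (Suc i) Q @ y # drop (Suc i) Q)"
    by (rule ip_insert[OF Qp _ y e(1)]) (use i e in auto)
  then have "length (take (Suc i) Q @ y # drop (Suc i) Q) \<le> length Q"
    using longestD[OF Q] by blast
  then show False using i by simp
qed

lemma QW:
  assumes Q: "longest_path V E Q" and d: "set Q \<inter> C0 = {}"
  shows "\<exists>s\<in>set Q. s \<in> W"
proof (rule ccontr)
  assume nw: "\<not> (\<exists>s\<in>set Q. s \<in> W)"
  have Qp: "is_path V E Q" using Q by (simp add: longest_path_def)
  have ne: "Q \<noteq> []" using Qp by (simp add: is_path_def)
  have z: "last Q \<in> set Q" using ne by simp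
  have "last Q \<in> V" using z Qp by (auto simp: is_path_def)
  then have "last Q \<in> R" using QR z d nw by blast
  then obtain w where w: "w \<in> W" "E w (last Q)" using RW by blast
  have "w \<notin> set Q" using w nw by blast
  then show False using append_longer[OF Q W_V[OF w(1)] _ sym[OF w(2)]] by blast
qed

lemma path2: "x \<in> V \<Longrightarrow> y \<in> V \<Longrightarrow> x \<noteq> y \<Longrightarrow> E x y \<Longrightarrow> is_path V E [x,y]"
  by (simp add: is_path_def nth_Cons split: nat.splits)

lemma step3:
  assumes Q: "longest_path V E Q" and d: "set Q \<inter> C0 = {}" and ws: "wst \<in> W"
    and mx: "\<And>w. w \<in> W \<Longrightarrow> card (R \<inter> {z. E w z}) \<le> card (R \<inter> {z. E wst z})"
  shows "wst \<in> set Q"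
proof (rule ccontr)
  assume nq: "wst \<notin> set Q"
  have Qp: "is_path V E Q" using Q by (simp add: longest_path_def)
  have Qd: "distinct Q" and QV: "set Q \<subseteq> V" and Qa: "\<And>i. Suc i < length Q \<Longrightarrow> E (Q!i) (Q!Suc i)"
    and Qne: "Q \<noteq> []" using Qp by (auto simp: is_path_def)
  define n where "n = length Q"
  have QWR: "Q!i \<in> W \<or> Q!i \<in> R" if "i < n" for i
  proof -
    have "Q!i \<in> set Q" using that n_def by simp
    then have "Q!i \<in> V" "Q!i \<notin> C0" using QV d by auto
    then show ?thesis using QR by blast
  qed
  have ex: "\<exists>i. i < n \<and> Q!i \<in> W" using QW[OF Q d] n_def by (auto simp: in_set_conv_nth)
  define j where "j = (LEAST i. i < n \<and> Q!i \<in> W)"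
  have jW: "j < n" "Q!j \<in> W" using LeastI_ex[OF ex] j_def by auto
  have jmin: "\<And>i. i < j \<Longrightarrow> Q!i \<in> R"
  proof -
    fix i assume i: "i < j"
    then have "\<not> (i < n \<and> Q!i \<in> W)" using not_less_Least j_def by blast
    then show "Q!i \<in> R" using QWR[of i] i jW by auto
  qed
  define p0 where "p0 = P!0"
  define p1 where "p1 = P!1"
  have l1: "1 < l" using len7 by linarith
  have pC: "p0 \<in> C0" "p1 \<in> C0" using l0 l1 by (auto simp: C0_def p0_def p1_def)
  have pQ: "p0 \<notin> set Q" "p1 \<notin> set Q" using pC d by auto
  have pV: "p0 \<in> V" "p1 \<in> V" using pC C0_V by auto
  have p01: "E p0 p1" "p0 \<noteq> p1" using Pa[OF l0 l1] Peq[OF l0 l1] by (auto simp: p0_def p1_def)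
  have Wp: "\<And>w. w \<in> W \<Longrightarrow> E w p0 \<and> E w p1 \<and> E p0 w \<and> E p1 w"
    using W_adj[of _ 0] W_adj[of _ 1] l0 l1 sym by (metis p0_def p1_def)
  have Rp: "\<And>r. r \<in> R \<Longrightarrow> \<not> E r p0 \<and> \<not> E p0 r"
    using R_nadj[of _ 0] l0 sym by (metis p0_def)
  have wV: "wst \<in> V" using W_V[OF ws] .
  define s where "s = Q!j"
  have sW: "s \<in> W" using jW s_def by simp
  have j2: "2 \<le> j"
  proof (rule ccontr)
    assume "\<not> 2 \<le> j"
    then have j1: "j \<le> 1" by simp
    have a: "is_path V E [p1, p0]" using path2[OF pV(2) pV(1)] p01 sym[OF p01(1)] by metis
    have b: "is_path V E (drop j Q)" using ip_drop[OF Qp] jW n_def by simp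
    have c: "set [p1,p0] \<inter> set (drop j Q) = {}" using pQ by (auto dest: in_set_dropD)
    have e: "E (last [p1,p0]) (hd (drop j Q))" using jW Wp[OF jW(2)] n_def by (simp add: hd_drop_conv_nth)
    have "is_path V E ([p1,p0] @ drop j Q)" by (rule ip_append[OF a b c e])
    then have "length ([p1,p0] @ drop j Q) \<le> n" using longestD[OF Q] n_def by blast
    then show False using j1 jW n_def by simp
  qed
  then obtain j' where j': "j = Suc (Suc j')" by (metis add_2_eq_Suc le_Suc_ex)
  define x where "x = Q!j'"
  define x' where "x' = Q!Suc j'"
  have xR: "x \<in> R" "x' \<in> R" using jmin j' x_def x'_def by auto
  have exx: "E x x'" using Qa[of j'] jW j' n_def x_def x'_def by simp
  have ex's: "E x' s" using Qa[of "Suc j'"] jW j' n_def x'_def s_def by simp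
  have nx': "\<not> E wst x'"
  proof
    assume a: "E wst x'"
    have "E wst x" using closure[OF xR(2) xR(1) sym[OF exx] ws a] .
    then have "E x wst" by (rule sym)
    then show False using insert_longer[OF Q _ wV nq, of j'] a jW j' n_def x_def x'_def by simp
  qed
  have jn: "Suc j < n"
  proof (rule ccontr)
    assume "\<not> Suc j < n"
    then have "j = n - 1" using jW by simp
    then have "last Q = s" using Qne n_def s_def by (simp add: last_conv_nth)
    then show False using append_longer[OF Q pV(1) pQ(1)] Wp[OF sW] by simp
  qed
  define y where "y = Q!Suc j"
  have esy: "E s y" using Qa[of j] jn n_def s_def y_def by simp
  have yR: "y \<in> R"
  proof (rule ccontr)
    assume "y \<notin> R"
    then have "y \<in> W" using QWR[OF jn] y_def by simp
    then show False using insert_longer[OF Q _ pV(1) pQ(1), of j] jn n_def Wp sW s_def y_def by simp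
  qed
  have ny: "\<not> E wst y"
  proof
    assume a: "E wst y"
    show False
    proof (cases "Suc (Suc j) < n")
      case False
      then have "Suc j = n - 1" using jn by simp
      then have "last Q = y" using Qne n_def y_def by (simp add: last_conv_nth)
      then show False using append_longer[OF Q wV nq] sym[OF a] by simp
    next
      case True
      define y' where "y' = Q!Suc (Suc j)"
      have eyy: "E y y'" using Qa[of "Suc j"] True n_def y_def y'_def by simp
      show False
      proof (cases "y' \<in> R")
        case True
        have "E wst y'" using closure[OF yR True eyy ws a] .
        then show False using insert_longer[OF Q _ wV nq, of "Suc j"] sym[OF a] \<open>Suc (Suc j) < n\<close> n_def y_def y'_def by simp
      next
        case False
        then have y'W: "y' \<in> W" using QWR[OF True] y'_def by simp
        have A: "is_path V E (take (Suc j) Q)" using ip_take[OF Qp] by simp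
        have B1: "is_path V E [p0,p1]" using path2 pV p01 by blast
        have B2: "is_path V E (drop (Suc (Suc j)) Q)" using ip_drop[OF Qp] True n_def by simp
        have B: "is_path V E ([p0,p1] @ drop (Suc (Suc j)) Q)"
          by (rule ip_append[OF B1 B2]) (use pQ True n_def Wp[OF y'W] y'_def in \<open>auto dest: in_set_dropD simp: hd_drop_conv_nth\<close>)
        have dj: "set (take (Suc j) Q) \<inter> set (drop (Suc (Suc j)) Q) = {}"
          using set_take_disj_set_drop_if_distinct[OF Qd] by simp
        have lA: "last (take (Suc j) Q) = s" using jW n_def s_def by (simp add: take_Suc_conv_app_nth)
        have "is_path V E (take (Suc j) Q @ [p0,p1] @ drop (Suc (Suc j)) Q)"
          by (rule ip_append[OF A B]) (use dj pQ lA Wp[OF sW] in \<open>auto dest: in_set_takeD\<close>)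
        then have "length (take (Suc j) Q @ [p0,p1] @ drop (Suc (Suc j)) Q) \<le> n" using longestD[OF Q] n_def by blast
        then show False using True jn n_def by simp
      qed
    qed
  qed
  have sQ: "s \<in> set Q" using jW n_def s_def by simp
  show False
  proof (cases "E s wst")
    case False
    show False
    proof (cases "E x' y")
      case True
      have sQs: "successively E Q" using Qp by (simp add: is_path_succ)
      have tj: "successively E (take j Q)" using sQs successively_append_iff[of E "take j Q" "drop j Q"] by simp
      have tjR: "set (take j Q) \<subseteq> R" using jmin by (auto simp: in_set_conv_nth)
      have tjne: "take j Q \<noteq> []" using j2 Qne by simp
      have ltj: "last (take j Q) = x'" using jW j' n_def x'_def by (simp add: take_Suc_conv_app_nth)
      have "\<forall>z\<in>set (take j Q). E s z" by (rule closure_list[OF tj tjR tjne sW]) (use ltj sym[OF ex's] in simp)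
      moreover have "Q!0 \<in> set (take j Q)"
      proof -
        have "take j Q ! 0 = Q!0" using j2 by simp
        moreover have "0 < length (take j Q)" using j2 jW n_def by simp
        ultimately show ?thesis by (metis nth_mem)
      qed
      ultimately have es0: "E s (Q!0)" by blast
      have C1: "is_path V E (take j Q)" using ip_take[OF Qp] j2 by simp
      have C2: "is_path V E (drop (Suc j) Q)" using ip_drop[OF Qp] jn n_def by simp
      have djs: "set (take j Q) \<inter> set (drop (Suc j) Q) = {}" using set_take_disj_set_drop_if_distinct[OF Qd] by simp
      have C: "is_path V E (take j Q @ drop (Suc j) Q)"
        by (rule ip_append[OF C1 C2 djs]) (use ltj True jn n_def y_def in \<open>simp add: hd_drop_conv_nth\<close>)
      have sV: "s \<in> V" using W_V[OF sW] .
      have sC0: "s \<noteq> p0" "s \<noteq> p1" using sQ pQ by auto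
      have e10: "E p1 p0" using sym[OF p01(1)] .
      have e0s: "E p0 s" using Wp[OF sW] by simp
      have D: "is_path V E [p1, p0, s]" using pV sV p01(2) sC0 e10 e0s
        by (auto simp: is_path_def nth_Cons split: nat.splits)
      have sn1: "s \<notin> set (take j Q)"
      proof
        assume "s \<in> set (take j Q)"
        moreover have "s \<in> set (drop j Q)"
        proof -
          have "drop j Q ! 0 = s" using jW n_def s_def by simp
          moreover have "0 < length (drop j Q)" using jW n_def by simp
          ultimately show ?thesis by (metis nth_mem)
        qed
        ultimately show False using set_take_disj_set_drop_if_distinct[OF Qd, of j j] by blast
      qed
      have sn2: "s \<notin> set (drop (Suc j) Q)"
      proof
        assume "s \<in> set (drop (Suc j) Q)"
        moreover have "s \<in> set (take (Suc j) Q)" using jW n_def s_def by (simp add: take_Suc_conv_app_nth)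
        ultimately show False using set_take_disj_set_drop_if_distinct[OF Qd, of "Suc j" "Suc j"] by blast
      qed
      have hC: "hd (take j Q @ drop (Suc j) Q) = Q!0" using tjne j2 Qne jW n_def by (simp add: hd_conv_nth nth_append)
      have "is_path V E ([p1, p0, s] @ (take j Q @ drop (Suc j) Q))"
        by (rule ip_append[OF D C]) (use pQ sn1 sn2 es0 hC in \<open>auto dest: in_set_takeD in_set_dropD\<close>)
      then have "length ([p1, p0, s] @ (take j Q @ drop (Suc j) Q)) \<le> n" using longestD[OF Q] n_def by blast
      then show False using jn n_def by simp
    next
      case nxy: False
      have dx'y: "x' \<noteq> y" using Qd jn j' n_def x'_def y_def by (simp add: nth_eq_iff_index_eq)
      have sw: "s \<noteq> wst" using sQ nq by auto
      have f1: "E s x'" "E s y" "E s p0" "E p0 wst" "\<not> E s wst" "\<not> E x' y" "\<not> E x' p0" "\<not> E y p0"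
        using sym[OF ex's] esy Wp[OF sW] Wp[OF ws] False nxy Rp[OF xR(2)] Rp[OF yR] by auto
      have f2: "\<not> E x' wst" using nx' sym[of x' wst] by blast
      have f3: "\<not> E y wst" using ny sym[of y wst] by blast
      note f = f1 f2 f3
      show False by (rule no_chair[of s x' y p0 wst]) (use f sw dx'y in simp_all)
    qed
  next
    case True
    have sub: "R \<inter> {z. E wst z} \<subseteq> R \<inter> {z. E s z}"
    proof
      fix r assume r: "r \<in> R \<inter> {z. E wst z}"
      show "r \<in> R \<inter> {z. E s z}"
      proof (rule ccontr)
        assume "r \<notin> R \<inter> {z. E s z}"
        then have "\<not> E s r" using r by simp
        moreover have "r \<in> R" "E wst r" using r by auto
        ultimately show False using bullB[OF sW ws True xR(2) \<open>r \<in> R\<close> sym[OF ex's] nx' \<open>E wst r\<close>] by blast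
      qed
    qed
    moreover have "x' \<in> R \<inter> {z. E s z}" "x' \<notin> R \<inter> {z. E wst z}" using xR sym[OF ex's] nx' by auto
    ultimately have ps: "R \<inter> {z. E wst z} \<subset> R \<inter> {z. E s z}" by blast
    have "finite (R \<inter> {z. E s z})" using finite_subset[OF _ finV] R_V by blast
    then have "card (R \<inter> {z. E wst z}) < card (R \<inter> {z. E s z})" using psubset_card_mono ps by blast
    then show False using mx[OF sW] by simp
  qed
qed

end

theorem lemma3p7:
  fixes V :: "'a set" and E :: "'a \<Rightarrow> 'a \<Rightarrow> bool" and P :: "'a list"
  assumes "graph V E" and "connected_graph V E" and "bull_chair_free V E"
    and "maximal_induced_path V E P" and "length P \<ge> 7"
  shows "lpt V E \<le> 2"
proof -
  interpret M: mpath V E P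
    by (unfold_locales) (use assms in auto)
  have ex: "\<exists>T. lp_transversal V E T \<and> card T \<le> 2"
  proof (cases "M.W = {}")
    case True
    define T where "T = {P!0}"
    have "lp_transversal V E T"
      unfolding lp_transversal_def
    proof (intro conjI allI impI)
      show "T \<subseteq> V" using M.PV M.l0 T_def by simp
      fix Q assume Q: "longest_path V E Q"
      show "T \<inter> set Q \<noteq> {}"
      proof (cases "set Q \<inter> M.C0 = {}")
        case True
        then show ?thesis using M.QW[OF Q True] \<open>M.W = {}\<close> by blast
      next
        case False
        then have "M.C0 \<subseteq> set Q" using M.lemX[OF Q] by blast
        moreover have "P!0 \<in> M.C0" using M.l0 by (simp add: M.C0_def)
        ultimately show ?thesis using T_def by blast
      qed
    qed
    then show ?thesis using T_def by auto
  next
    case False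
    let ?f = "\<lambda>w. card (M.R \<inter> {z. E w z})"
    have fW: "finite M.W" using finite_subset[OF _ M.finV] M.W_V by blast
    have "Max (?f ` M.W) \<in> ?f ` M.W" using Max_in fW False by blast
    then obtain wst where ws: "wst \<in> M.W" "?f wst = Max (?f ` M.W)" by auto
    have mx: "\<And>w. w \<in> M.W \<Longrightarrow> ?f w \<le> ?f wst" using ws(2) Max_ge fW by simp
    define T where "T = {P!0, wst}"
    have "lp_transversal V E T"
      unfolding lp_transversal_def
    proof (intro conjI allI impI)
      show "T \<subseteq> V" using M.PV M.l0 M.W_V[OF ws(1)] T_def by simp
      fix Q assume Q: "longest_path V E Q"
      show "T \<inter> set Q \<noteq> {}"
      proof (cases "set Q \<inter> M.C0 = {}")
        case True
        have "wst \<in> set Q" by (rule M.step3[OF Q True ws(1) mx])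
        then show ?thesis using T_def by blast
      next
        case False
        then have "M.C0 \<subseteq> set Q" using M.lemX[OF Q] by blast
        moreover have "P!0 \<in> M.C0" using M.l0 by (simp add: M.C0_def)
        ultimately show ?thesis using T_def by blast
      qed
    qed
    moreover have "card T \<le> 2" using T_def by (simp add: card_insert_le_m1)
    ultimately show ?thesis by blast
  qed
  then obtain T where T: "lp_transversal V E T" "card T \<le> 2" by blast
  have "finite {T. lp_transversal V E T}"
  proof (rule finite_subset)
    show "{T. lp_transversal V E T} \<subseteq> Pow V" by (auto simp: lp_transversal_def)
    show "finite (Pow V)" using M.finV by simp
  qed
  then have "lpt V E \<le> card T" unfolding lpt_def using T(1) by (intro Min_le) auto
  then show ?thesis using T(2) by simp
qed

end
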